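(* Let $A$ be a commutative unital ring, $d$ a derivation of $A$, and $B$ a commutative unital $A$-algebra which is finitely generated and free as an $A$-module. Let $\delta$ be a derivation of $B$ such that the structure map $A\to B$ is a differential homomorphism $(A,d)\to(B,\delta)$. Let $(D,\partial_D)$ be a differential $(B,\delta)$-algebra, i.e. $D$ is a $B$-algebra, $\partial_D$ a derivation of $D$, and the structure map $(B,\delta)\to(D,\partial_D)$ is differential. Let $W(D)$ be the classical Weil descent of $D$ from $B$ to $A$ with unit $W_D:D\to W(D)\otimes_A B$. Then there is a unique derivation $\partial_D^W$ on $W(D)$ such that $(W(D),\partial_D^W)$ is a differential $(A,d)$-algebra and $$W_D:(D,\partial_D)\to (W(D)\otimes_A B,\ \partial_D^W\otimes\delta)$$ is a differential $(B,\delta)$-algebra homomorphism, i.e. $W_D\circ\partial_D=(\partial_D^W\otimes\delta)\circ W_D$. Furthermore, $\partial_D^W$ only depends on $\partial_D$ and not on $\delta$: if $\delta'$ is another derivation of $B$ such that $(B,\delta')$ is a differential $(A,d)$-algebra and $(D,\partial_D)$ is a differential $(B,\delta')$-algebra, then the derivation of $W(D)$ obtained in the same way from $\delta'$ coincides with $\partial_D^W$.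
   Context: All rings and algebras are commutative and unital, homomorphisms unital. Classical Weil descent: for an $A$-algebra $B$ that is free of finite rank as an $A$-module, let $F$ be the functor from $A$-algebras to $B$-algebras, $C\mapsto C\otimes_A B$ (structure map $b\mapsto 1\otimes b$). For a $B$-algebra $D$ the Weil descent is an $A$-algebra $W(D)$ together with a $B$-algebra homomorphism $W_D:D\to W(D)\otimes_A B$ (the unit) such that for every $A$-algebra $C$ and every $B$-algebra homomorphism $f:D\to C\otimes_A B$ there is a unique $A$-algebra homomorphism $g:W(D)\to C$ with $(g\otimes \mathrm{id}_B)\circ W_D=f$; this determines $(W(D),W_D)$ up to unique isomorphism. If $(C,\partial_C)$ is a differential $(A,d)$-algebra (an $A$-algebra with a derivation such that $A\to C$ is a differential map $(A,d)\to(C,\partial_C)$), then $\partial_C\otimes\delta$ denotes the unique derivation on $C\otimes_A B$ such that the natural maps $C\to C\otimes_A B$ and $B\to C\otimes_A B$ are differential. *)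

theory Defs
  imports "HOL-Algebra.Ring" "HOL-Algebra.RingHom"
begin

definition derivation :: "('r, 'm) ring_scheme \<Rightarrow> ('r \<Rightarrow> 'r) \<Rightarrow> bool" where
  "derivation R D \<longleftrightarrow> D \<in> carrier R \<rightarrow> carrier R \<and>
     (\<forall>x\<in>carrier R. \<forall>y\<in>carrier R.
        D (x \<oplus>\<^bsub>R\<^esub> y) = D x \<oplus>\<^bsub>R\<^esub> D y \<and>
        D (x \<otimes>\<^bsub>R\<^esub> y) = (D x \<otimes>\<^bsub>R\<^esub> y) \<oplus>\<^bsub>R\<^esub> (x \<otimes>\<^bsub>R\<^esub> D y))"

definition diff_hom ::
  "('r, 'm) ring_scheme \<Rightarrow> ('r \<Rightarrow> 'r) \<Rightarrow> ('s, 'n) ring_scheme \<Rightarrow> ('s \<Rightarrow> 's) \<Rightarrow> ('r \<Rightarrow> 's) \<Rightarrow> bool" where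
  "diff_hom R dR S dS f \<longleftrightarrow> f \<in> ring_hom R S \<and> (\<forall>x\<in>carrier R. f (dR x) = dS (f x))"

definition is_basis ::
  "'a ring \<Rightarrow> 'b ring \<Rightarrow> ('a \<Rightarrow> 'b) \<Rightarrow> 'b list \<Rightarrow> bool" where
  "is_basis A B phi es \<longleftrightarrow> set es \<subseteq> carrier B \<and>
     (\<forall>b\<in>carrier B. \<exists>!c. c \<in> {..<length es} \<rightarrow>\<^sub>E carrier A \<and>
         b = finsum B (\<lambda>k. phi (c k) \<otimes>\<^bsub>B\<^esub> es ! k) {..<length es})"

definition coords :: "'a ring \<Rightarrow> 'b ring \<Rightarrow> ('a \<Rightarrow> 'b) \<Rightarrow> 'b list \<Rightarrow> 'b \<Rightarrow> nat \<Rightarrow> 'a" where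
  "coords A B phi es b = (THE c. c \<in> {..<length es} \<rightarrow>\<^sub>E carrier A \<and>
         b = finsum B (\<lambda>k. phi (c k) \<otimes>\<^bsub>B\<^esub> es ! k) {..<length es})"

text \<open>Realised as C^n (n = length es): the vector (v_k) stands for
  the sum over k of v_k \<otimes> e_k. Multiplication uses the structure constants of B.
  psi : A -> C is the structure map of the A-algebra C.\<close>
definition tensor :: "'a ring \<Rightarrow> 'b ring \<Rightarrow> ('a \<Rightarrow> 'b) \<Rightarrow> 'b list \<Rightarrow> 'c ring \<Rightarrow> ('a \<Rightarrow> 'c)
    \<Rightarrow> (nat \<Rightarrow> 'c) ring" where
  "tensor A B phi es C psi =
    \<lparr> carrier = {..<length es} \<rightarrow>\<^sub>E carrier C,
      mult = (\<lambda>u v. \<lambda>k\<in>{..<length es}.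
                 finsum C (\<lambda>i. finsum C (\<lambda>j.
                    (u i \<otimes>\<^bsub>C\<^esub> v j) \<otimes>\<^bsub>C\<^esub>
                      psi (coords A B phi es (es ! i \<otimes>\<^bsub>B\<^esub> es ! j) k))
                  {..<length es}) {..<length es}),
      one = (\<lambda>k\<in>{..<length es}. psi (coords A B phi es \<one>\<^bsub>B\<^esub> k)),
      zero = (\<lambda>k\<in>{..<length es}. \<zero>\<^bsub>C\<^esub>),
      add = (\<lambda>u v. \<lambda>k\<in>{..<length es}. u k \<oplus>\<^bsub>C\<^esub> v k) \<rparr>"

text \<open>The natural map C -> C \<otimes>_A B, c \<mapsto> c \<otimes> 1.\<close>
definition tensor_inl :: "'a ring \<Rightarrow> 'b ring \<Rightarrow> ('a \<Rightarrow> 'b) \<Rightarrow> 'b list \<Rightarrow> 'c ring \<Rightarrow> ('a \<Rightarrow> 'c)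
    \<Rightarrow> 'c \<Rightarrow> (nat \<Rightarrow> 'c)" where
  "tensor_inl A B phi es C psi c =
     (\<lambda>k\<in>{..<length es}. c \<otimes>\<^bsub>C\<^esub> psi (coords A B phi es \<one>\<^bsub>B\<^esub> k))"

text \<open>The natural map B -> C \<otimes>_A B, b \<mapsto> 1 \<otimes> b (the B-algebra structure map).\<close>
definition tensor_inr :: "'a ring \<Rightarrow> 'b ring \<Rightarrow> ('a \<Rightarrow> 'b) \<Rightarrow> 'b list \<Rightarrow> 'c ring \<Rightarrow> ('a \<Rightarrow> 'c)
    \<Rightarrow> 'b \<Rightarrow> (nat \<Rightarrow> 'c)" where
  "tensor_inr A B phi es C psi b = (\<lambda>k\<in>{..<length es}. psi (coords A B phi es b k))"

text \<open>g \<otimes> id_B : C \<otimes>_A B -> C' \<otimes>_A B.\<close>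
definition tensor_map :: "'b list \<Rightarrow> ('c \<Rightarrow> 'e) \<Rightarrow> (nat \<Rightarrow> 'c) \<Rightarrow> (nat \<Rightarrow> 'e)" where
  "tensor_map es g v = (\<lambda>k\<in>{..<length es}. g (v k))"

text \<open>\<partial>_C \<otimes> \<delta>: the unique derivation of C \<otimes>_A B such that the natural maps from C
  and from B are differential (taken extensional on the carrier).\<close>
definition tensor_deriv :: "'a ring \<Rightarrow> 'b ring \<Rightarrow> ('a \<Rightarrow> 'b) \<Rightarrow> 'b list \<Rightarrow> 'c ring \<Rightarrow> ('a \<Rightarrow> 'c)
    \<Rightarrow> ('c \<Rightarrow> 'c) \<Rightarrow> ('b \<Rightarrow> 'b) \<Rightarrow> (nat \<Rightarrow> 'c) \<Rightarrow> (nat \<Rightarrow> 'c)" where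
  "tensor_deriv A B phi es C psi dC dB =
     (THE E. derivation (tensor A B phi es C psi) E \<and>
             E \<in> extensional (carrier (tensor A B phi es C psi)) \<and>
             diff_hom C dC (tensor A B phi es C psi) E (tensor_inl A B phi es C psi) \<and>
             diff_hom B dB (tensor A B phi es C psi) E (tensor_inr A B phi es C psi))"

text \<open>Test algebras C range over
  rings whose carrier lies in the type 'w \<times> 'w.\<close>
definition is_weil_descent ::
  "'a ring \<Rightarrow> 'b ring \<Rightarrow> ('a \<Rightarrow> 'b) \<Rightarrow> 'b list \<Rightarrow> 'd ring \<Rightarrow> ('b \<Rightarrow> 'd)
   \<Rightarrow> 'w ring \<Rightarrow> ('a \<Rightarrow> 'w) \<Rightarrow> ('d \<Rightarrow> (nat \<Rightarrow> 'w)) \<Rightarrow> bool" where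
  "is_weil_descent A B phi es D phiD W phiW u \<longleftrightarrow>
     cring W \<and> phiW \<in> ring_hom A W \<and>
     u \<in> ring_hom D (tensor A B phi es W phiW) \<and>
     (\<forall>b\<in>carrier B. u (phiD b) = tensor_inr A B phi es W phiW b) \<and>
     (\<forall>(C :: ('w \<times> 'w) ring) psi f.
        cring C \<and> psi \<in> ring_hom A C \<and>
        f \<in> ring_hom D (tensor A B phi es C psi) \<and>
        (\<forall>b\<in>carrier B. f (phiD b) = tensor_inr A B phi es C psi b) \<longrightarrow>
        (\<exists>g. g \<in> ring_hom W C \<and> (\<forall>a\<in>carrier A. g (phiW a) = psi a) \<and>
             (\<forall>x\<in>carrier D. tensor_map es g (u x) = f x) \<and>
             (\<forall>g'. g' \<in> ring_hom W C \<and> (\<forall>a\<in>carrier A. g' (phiW a) = psi a) \<and>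
                   (\<forall>x\<in>carrier D. tensor_map es g' (u x) = f x) \<longrightarrow>
                   (\<forall>w\<in>carrier W. g' w = g w))))"

definition weil_deriv_cond ::
  "'a ring \<Rightarrow> ('a \<Rightarrow> 'a) \<Rightarrow> 'b ring \<Rightarrow> ('a \<Rightarrow> 'b) \<Rightarrow> 'b list \<Rightarrow> ('b \<Rightarrow> 'b)
   \<Rightarrow> 'd ring \<Rightarrow> ('d \<Rightarrow> 'd) \<Rightarrow> 'w ring \<Rightarrow> ('a \<Rightarrow> 'w) \<Rightarrow> ('d \<Rightarrow> (nat \<Rightarrow> 'w))
   \<Rightarrow> ('w \<Rightarrow> 'w) \<Rightarrow> bool" where
  "weil_deriv_cond A d B phi es dB D dD W phiW u dW \<longleftrightarrow>
     derivation W dW \<and> diff_hom A d W dW phiW \<and>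
     diff_hom D dD (tensor A B phi es W phiW) (tensor_deriv A B phi es W phiW dW dB) u"

end

theory Submission
  imports Defs
begin

lemma foldSetD_cong_aux:
  assumes "(B, y) \<in> foldSetD D f e"
  shows "B \<subseteq> S \<Longrightarrow> (\<forall>x\<in>S. f x = g x) \<Longrightarrow> (B, y) \<in> foldSetD D g e"
  using assms
proof (induction rule: foldSetD.induct)
  case (emptyI) then show ?case by (simp add: foldSetD.emptyI)
next
  case (insertI x A y)
  then have "f x = g x" by auto
  with insertI show ?case by (metis foldSetD.insertI insert_subset)
qed

lemma foldD_cong_all:
  assumes "\<forall>x\<in>S. f x = g x"
  shows "foldD D f e S = foldD D g e S"
proof -
  have "\<And>y. (S, y) \<in> foldSetD D f e \<longleftrightarrow> (S, y) \<in> foldSetD D g e"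
    using foldSetD_cong_aux[of S _ D f e S g] foldSetD_cong_aux[of S _ D g e S f] assms
    by auto
  then show ?thesis unfolding foldD_def by simp
qed

lemma finsum_cong_all:
  assumes "\<And>i. i \<in> S \<Longrightarrow> f i = g i"
  shows "finsum R f S = finsum R g S"
proof -
  have "\<forall>x\<in>S. (add R \<circ> f) x = (add R \<circ> g) x" using assms by auto
  then show ?thesis unfolding finsum_def finprod_def
    using foldD_cong_all[of S "add R \<circ> f" "add R \<circ> g"] by simp
qed

context cring
begin

lemma finsum_swap:
  assumes "finite I" "finite J" "\<And>i j. i \<in> I \<Longrightarrow> j \<in> J \<Longrightarrow> F i j \<in> carrier R"
  shows "(\<Oplus>i\<in>I. \<Oplus>j\<in>J. F i j) = (\<Oplus>j\<in>J. \<Oplus>i\<in>I. F i j)"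
  using assms(1,3)
proof (induction I rule: finite_induct)
  case empty then show ?case using assms(2) by (simp add: finsum_zero)
next
  case (insert x I)
  have "(\<Oplus>i\<in>insert x I. \<Oplus>j\<in>J. F i j) = (\<Oplus>j\<in>J. F x j) \<oplus> (\<Oplus>i\<in>I. \<Oplus>j\<in>J. F i j)"
    using insert by (intro finsum_insert) (auto intro!: finsum_closed)
  also have "\<dots> = (\<Oplus>j\<in>J. F x j) \<oplus> (\<Oplus>j\<in>J. \<Oplus>i\<in>I. F i j)"
    using insert by simp
  also have "\<dots> = (\<Oplus>j\<in>J. F x j \<oplus> (\<Oplus>i\<in>I. F i j))"
    using insert by (intro finsum_addf[symmetric]) (auto intro!: finsum_closed)
  also have "\<dots> = (\<Oplus>j\<in>J. \<Oplus>i\<in>insert x I. F i j)"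
    using insert by (intro finsum_cong_all finsum_insert[symmetric]) auto
  finally show ?case .
qed

lemma finsum_delta:
  assumes "finite I" "j \<in> I" "\<And>i. i \<in> I \<Longrightarrow> f i \<in> carrier R"
  shows "(\<Oplus>i\<in>I. if i = j then f i else \<zero>) = f j"
  using add.finprod_singleton_swap[of j I f] assms by auto

lemma finsum_delta':
  assumes "finite I" "j \<in> I" "\<And>i. i \<in> I \<Longrightarrow> f i \<in> carrier R"
  shows "(\<Oplus>i\<in>I. if j = i then f i else \<zero>) = f j"
  using add.finprod_singleton[of j I f] assms by auto

lemma finsum_ldistr':
  "\<lbrakk> finite A; a \<in> carrier R; \<And>i. i \<in> A \<Longrightarrow> f i \<in> carrier R \<rbrakk> \<Longrightarrow>
    (\<Oplus> i \<in> A. (f i)) \<otimes> a = (\<Oplus> i \<in> A. ((f i) \<otimes> a))"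
  by (rule finsum_ldistr) auto

lemma finsum_rdistr':
  "\<lbrakk> finite A; a \<in> carrier R; \<And>i. i \<in> A \<Longrightarrow> f i \<in> carrier R \<rbrakk> \<Longrightarrow>
    a \<otimes> (\<Oplus> i \<in> A. (f i)) = (\<Oplus> i \<in> A. (a \<otimes> (f i)))"
  by (rule finsum_rdistr) auto

lemma finsum_addf':
  "\<lbrakk> \<And>i. i \<in> A \<Longrightarrow> f i \<in> carrier R; \<And>i. i \<in> A \<Longrightarrow> g i \<in> carrier R \<rbrakk> \<Longrightarrow>
    (\<Oplus> i \<in> A. f i \<oplus> g i) = (\<Oplus> i \<in> A. f i) \<oplus> (\<Oplus> i \<in> A. g i)"
  by (rule finsum_addf) auto

lemma finsum_closed':
  "\<lbrakk> \<And>i. i \<in> A \<Longrightarrow> f i \<in> carrier R \<rbrakk> \<Longrightarrow> (\<Oplus> i \<in> A. f i) \<in> carrier R"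
  by (rule finsum_closed) auto

lemma deriv_zero:
  assumes "derivation R D" shows "D \<zero> = \<zero>"
proof -
  have c: "D \<zero> \<in> carrier R" using assms unfolding derivation_def by auto
  have "D \<zero> = D (\<zero> \<oplus> \<zero>)" by simp
  also have "\<dots> = D \<zero> \<oplus> D \<zero>" using assms unfolding derivation_def by (meson zero_closed)
  finally show ?thesis using c by (metis add.l_cancel_one r_zero zero_closed)
qed

lemma deriv_one:
  assumes "derivation R D" shows "D \<one> = \<zero>"
proof -
  have c: "D \<one> \<in> carrier R" using assms unfolding derivation_def by auto
  have "D \<one> = D (\<one> \<otimes> \<one>)" by simp
  also have "\<dots> = D \<one> \<otimes> \<one> \<oplus> \<one> \<otimes> D \<one>" using assms c unfolding derivation_def by (meson one_closed)
  also have "\<dots> = D \<one> \<oplus> D \<one>" using c by simp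
  finally show ?thesis using c by (metis add.l_cancel_one r_zero zero_closed)
qed

lemma deriv_finsum:
  assumes "derivation R D" "finite I" "\<And>i. i \<in> I \<Longrightarrow> f i \<in> carrier R"
  shows "D (\<Oplus>i\<in>I. f i) = (\<Oplus>i\<in>I. D (f i))"
  using assms(2,3)
proof (induction I rule: finite_induct)
  case empty then show ?case using deriv_zero[OF assms(1)] by simp
next
  case (insert x I)
  have cl: "\<And>y. y \<in> carrier R \<Longrightarrow> D y \<in> carrier R" using assms(1) unfolding derivation_def by auto
  have "D (\<Oplus>i\<in>insert x I. f i) = D (f x \<oplus> (\<Oplus>i\<in>I. f i))"
    using insert by (subst finsum_insert) (auto intro!: finsum_closed)
  also have "\<dots> = D (f x) \<oplus> D (\<Oplus>i\<in>I. f i)"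
    using insert assms(1) unfolding derivation_def by (auto intro!: finsum_closed')
  also have "\<dots> = (\<Oplus>i\<in>insert x I. D (f i))"
    using insert cl by (subst finsum_insert) (auto intro!: finsum_closed)
  finally show ?case .
qed

end



locale bsetup =
  fixes A :: "'a ring" and B :: "'b ring" and phi :: "'a \<Rightarrow> 'b" and es :: "'b list"
  assumes cA: "cring A" and cB: "cring B" and phi: "phi \<in> ring_hom A B"
    and basis: "is_basis A B phi es"
begin

sublocale A: cring A by (rule cA)
sublocale B: cring B by (rule cB)
sublocale ph: ring_hom_cring A B phi by unfold_locales (rule phi)

abbreviation "n \<equiv> length es"
abbreviation "cf \<equiv> coords A B phi es"
abbreviation "cst i j \<equiv> cf (es!i \<otimes>\<^bsub>B\<^esub> es!j)"

lemma es_closed [simp]: "k < n \<Longrightarrow> es!k \<in> carrier B"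
  using basis unfolding is_basis_def by auto

lemma cf_spec:
  assumes "b \<in> carrier B"
  shows "cf b \<in> {..<n} \<rightarrow>\<^sub>E carrier A \<and> b = (\<Oplus>\<^bsub>B\<^esub>k\<in>{..<n}. phi (cf b k) \<otimes>\<^bsub>B\<^esub> es!k)"
proof -
  from basis assms have ex1: "\<exists>!c. c \<in> {..<n} \<rightarrow>\<^sub>E carrier A \<and>
         b = finsum B (\<lambda>k. phi (c k) \<otimes>\<^bsub>B\<^esub> es ! k) {..<n}"
    unfolding is_basis_def by blast
  show ?thesis unfolding coords_def by (rule theI'[OF ex1])
qed

lemma cf_closed [simp]: "b \<in> carrier B \<Longrightarrow> k < n \<Longrightarrow> cf b k \<in> carrier A"
  using cf_spec[of b] by auto

lemma cf_repr: "b \<in> carrier B \<Longrightarrow> b = (\<Oplus>\<^bsub>B\<^esub>k\<in>{..<n}. phi (cf b k) \<otimes>\<^bsub>B\<^esub> es!k)"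
  using cf_spec by blast

lemma cf_unique:
  assumes "c \<in> {..<n} \<rightarrow>\<^sub>E carrier A" "b = (\<Oplus>\<^bsub>B\<^esub>k\<in>{..<n}. phi (c k) \<otimes>\<^bsub>B\<^esub> es!k)"
  shows "cf b = c"
proof -
  have bc: "b \<in> carrier B" using assms
    by (auto intro!: B.finsum_closed' simp: PiE_def Pi_def)
  from basis bc have u: "\<exists>!c. c \<in> {..<n} \<rightarrow>\<^sub>E carrier A \<and>
         b = finsum B (\<lambda>k. phi (c k) \<otimes>\<^bsub>B\<^esub> es ! k) {..<n}"
    unfolding is_basis_def by blast
  show ?thesis using cf_spec[OF bc] assms u by blast
qed

lemma cf_eqI:
  assumes "\<And>k. k < n \<Longrightarrow> c k \<in> carrier A" "b = (\<Oplus>\<^bsub>B\<^esub>k\<in>{..<n}. phi (c k) \<otimes>\<^bsub>B\<^esub> es!k)"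
    "k < n"
  shows "cf b k = c k"
proof -
  have "cf b = restrict c {..<n}"
    apply (rule cf_unique)
    using assms(1) apply auto[1]
    using assms(2) by (auto intro!: finsum_cong_all)
  then show ?thesis using assms(3) by simp
qed

lemma cf_basis:
  assumes "j < n" "k < n"
  shows "cf (es!j) k = (if k = j then \<one>\<^bsub>A\<^esub> else \<zero>\<^bsub>A\<^esub>)"
proof (rule cf_eqI)
  show "es!j = (\<Oplus>\<^bsub>B\<^esub>k\<in>{..<n}. phi (if k = j then \<one>\<^bsub>A\<^esub> else \<zero>\<^bsub>A\<^esub>) \<otimes>\<^bsub>B\<^esub> es!k)"
  proof -
    have "(\<Oplus>\<^bsub>B\<^esub>k\<in>{..<n}. phi (if k = j then \<one>\<^bsub>A\<^esub> else \<zero>\<^bsub>A\<^esub>) \<otimes>\<^bsub>B\<^esub> es!k)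
        = (\<Oplus>\<^bsub>B\<^esub>k\<in>{..<n}. if k = j then es!k else \<zero>\<^bsub>B\<^esub>)"
      by (rule finsum_cong_all) auto
    also have "\<dots> = es!j" using assms by (intro B.finsum_delta) auto
    finally show ?thesis by simp
  qed
qed (use assms in auto)

lemma cf_add:
  assumes "b \<in> carrier B" "b' \<in> carrier B" "k < n"
  shows "cf (b \<oplus>\<^bsub>B\<^esub> b') k = cf b k \<oplus>\<^bsub>A\<^esub> cf b' k"
proof (rule cf_eqI[OF _ _ assms(3)])
  have "b \<oplus>\<^bsub>B\<^esub> b' = (\<Oplus>\<^bsub>B\<^esub>k\<in>{..<n}. phi (cf b k) \<otimes>\<^bsub>B\<^esub> es!k)
      \<oplus>\<^bsub>B\<^esub> (\<Oplus>\<^bsub>B\<^esub>k\<in>{..<n}. phi (cf b' k) \<otimes>\<^bsub>B\<^esub> es!k)"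
    using cf_repr assms by auto
  also have "\<dots> = (\<Oplus>\<^bsub>B\<^esub>k\<in>{..<n}. phi (cf b k) \<otimes>\<^bsub>B\<^esub> es!k \<oplus>\<^bsub>B\<^esub> phi (cf b' k) \<otimes>\<^bsub>B\<^esub> es!k)"
    using assms by (intro B.finsum_addf'[symmetric]) auto
  also have "\<dots> = (\<Oplus>\<^bsub>B\<^esub>k\<in>{..<n}. phi (cf b k \<oplus>\<^bsub>A\<^esub> cf b' k) \<otimes>\<^bsub>B\<^esub> es!k)"
    using assms by (intro finsum_cong_all) (auto simp: B.l_distr)
  finally show "b \<oplus>\<^bsub>B\<^esub> b' = (\<Oplus>\<^bsub>B\<^esub>k\<in>{..<n}. phi (cf b k \<oplus>\<^bsub>A\<^esub> cf b' k) \<otimes>\<^bsub>B\<^esub> es!k)" .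
qed (use assms in auto)

lemma cf_zero:
  assumes "k < n" shows "cf \<zero>\<^bsub>B\<^esub> k = \<zero>\<^bsub>A\<^esub>"
proof (rule cf_eqI[OF _ _ assms])
  show "\<zero>\<^bsub>B\<^esub> = (\<Oplus>\<^bsub>B\<^esub>k\<in>{..<n}. phi \<zero>\<^bsub>A\<^esub> \<otimes>\<^bsub>B\<^esub> es!k)"
  proof -
    have "(\<Oplus>\<^bsub>B\<^esub>k\<in>{..<n}. phi \<zero>\<^bsub>A\<^esub> \<otimes>\<^bsub>B\<^esub> es!k) = (\<Oplus>\<^bsub>B\<^esub>k\<in>{..<n}. \<zero>\<^bsub>B\<^esub>)"
      by (intro finsum_cong_all) auto
    then show ?thesis by (simp add: B.finsum_zero)
  qed
qed auto

lemma cst_closed [simp]: "i < n \<Longrightarrow> j < n \<Longrightarrow> k < n \<Longrightarrow> cst i j k \<in> carrier A"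
  by simp

lemma cf_mult:
  assumes b: "b \<in> carrier B" and b': "b' \<in> carrier B" and k: "k < n"
  shows "cf (b \<otimes>\<^bsub>B\<^esub> b') k =
     (\<Oplus>\<^bsub>A\<^esub>i\<in>{..<n}. \<Oplus>\<^bsub>A\<^esub>j\<in>{..<n}. (cf b i \<otimes>\<^bsub>A\<^esub> cf b' j) \<otimes>\<^bsub>A\<^esub> cst i j k)"
proof (rule cf_eqI[OF _ _ k])
  show "\<And>k. k < n \<Longrightarrow> (\<Oplus>\<^bsub>A\<^esub>i\<in>{..<n}. \<Oplus>\<^bsub>A\<^esub>j\<in>{..<n}. (cf b i \<otimes>\<^bsub>A\<^esub> cf b' j) \<otimes>\<^bsub>A\<^esub> cst i j k) \<in> carrier A"
    using assms by (auto intro!: A.finsum_closed')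
  have "b \<otimes>\<^bsub>B\<^esub> b' = (\<Oplus>\<^bsub>B\<^esub>i\<in>{..<n}. phi (cf b i) \<otimes>\<^bsub>B\<^esub> es!i)
      \<otimes>\<^bsub>B\<^esub> (\<Oplus>\<^bsub>B\<^esub>j\<in>{..<n}. phi (cf b' j) \<otimes>\<^bsub>B\<^esub> es!j)"
    using cf_repr assms by auto
  also have "\<dots> = (\<Oplus>\<^bsub>B\<^esub>i\<in>{..<n}. (phi (cf b i) \<otimes>\<^bsub>B\<^esub> es!i)
      \<otimes>\<^bsub>B\<^esub> (\<Oplus>\<^bsub>B\<^esub>j\<in>{..<n}. phi (cf b' j) \<otimes>\<^bsub>B\<^esub> es!j))"
    using assms by (intro B.finsum_ldistr') (auto intro!: B.finsum_closed')
  also have "\<dots> = (\<Oplus>\<^bsub>B\<^esub>i\<in>{..<n}. \<Oplus>\<^bsub>B\<^esub>j\<in>{..<n}. (phi (cf b i) \<otimes>\<^bsub>B\<^esub> es!i)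
      \<otimes>\<^bsub>B\<^esub> (phi (cf b' j) \<otimes>\<^bsub>B\<^esub> es!j))"
    using assms by (intro finsum_cong_all B.finsum_rdistr') auto
  also have "\<dots> = (\<Oplus>\<^bsub>B\<^esub>i\<in>{..<n}. \<Oplus>\<^bsub>B\<^esub>j\<in>{..<n}. phi (cf b i \<otimes>\<^bsub>A\<^esub> cf b' j) \<otimes>\<^bsub>B\<^esub>
      (\<Oplus>\<^bsub>B\<^esub>k\<in>{..<n}. phi (cst i j k) \<otimes>\<^bsub>B\<^esub> es!k))"
  proof (intro finsum_cong_all)
    fix i j assume ij: "i \<in> {..<n}" "j \<in> {..<n}"
    have "(phi (cf b i) \<otimes>\<^bsub>B\<^esub> es!i) \<otimes>\<^bsub>B\<^esub> (phi (cf b' j) \<otimes>\<^bsub>B\<^esub> es!j)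
       = phi (cf b i \<otimes>\<^bsub>A\<^esub> cf b' j) \<otimes>\<^bsub>B\<^esub> (es!i \<otimes>\<^bsub>B\<^esub> es!j)"
      using ij assms by (simp add: B.m_ac)
    also have "es!i \<otimes>\<^bsub>B\<^esub> es!j = (\<Oplus>\<^bsub>B\<^esub>k\<in>{..<n}. phi (cst i j k) \<otimes>\<^bsub>B\<^esub> es!k)"
      using ij by (intro cf_repr) auto
    finally show "(phi (cf b i) \<otimes>\<^bsub>B\<^esub> es!i) \<otimes>\<^bsub>B\<^esub> (phi (cf b' j) \<otimes>\<^bsub>B\<^esub> es!j)
       = phi (cf b i \<otimes>\<^bsub>A\<^esub> cf b' j) \<otimes>\<^bsub>B\<^esub> (\<Oplus>\<^bsub>B\<^esub>k\<in>{..<n}. phi (cst i j k) \<otimes>\<^bsub>B\<^esub> es!k)" .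
  qed
  also have "\<dots> = (\<Oplus>\<^bsub>B\<^esub>i\<in>{..<n}. \<Oplus>\<^bsub>B\<^esub>j\<in>{..<n}. \<Oplus>\<^bsub>B\<^esub>k\<in>{..<n}.
       phi ((cf b i \<otimes>\<^bsub>A\<^esub> cf b' j) \<otimes>\<^bsub>A\<^esub> cst i j k) \<otimes>\<^bsub>B\<^esub> es!k)"
  proof (intro finsum_cong_all)
    fix i j assume ij: "i \<in> {..<n}" "j \<in> {..<n}"
    show "phi (cf b i \<otimes>\<^bsub>A\<^esub> cf b' j) \<otimes>\<^bsub>B\<^esub> (\<Oplus>\<^bsub>B\<^esub>k\<in>{..<n}. phi (cst i j k) \<otimes>\<^bsub>B\<^esub> es!k)
      = (\<Oplus>\<^bsub>B\<^esub>k\<in>{..<n}. phi ((cf b i \<otimes>\<^bsub>A\<^esub> cf b' j) \<otimes>\<^bsub>A\<^esub> cst i j k) \<otimes>\<^bsub>B\<^esub> es!k)"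
      using ij assms by (subst B.finsum_rdistr') (auto intro!: finsum_cong_all simp: B.m_assoc)
  qed
  also have "\<dots> = (\<Oplus>\<^bsub>B\<^esub>i\<in>{..<n}. \<Oplus>\<^bsub>B\<^esub>k\<in>{..<n}. \<Oplus>\<^bsub>B\<^esub>j\<in>{..<n}.
       phi ((cf b i \<otimes>\<^bsub>A\<^esub> cf b' j) \<otimes>\<^bsub>A\<^esub> cst i j k) \<otimes>\<^bsub>B\<^esub> es!k)"
    using assms by (intro finsum_cong_all B.finsum_swap) auto
  also have "\<dots> = (\<Oplus>\<^bsub>B\<^esub>k\<in>{..<n}. \<Oplus>\<^bsub>B\<^esub>i\<in>{..<n}. \<Oplus>\<^bsub>B\<^esub>j\<in>{..<n}.
       phi ((cf b i \<otimes>\<^bsub>A\<^esub> cf b' j) \<otimes>\<^bsub>A\<^esub> cst i j k) \<otimes>\<^bsub>B\<^esub> es!k)"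
    using assms by (intro B.finsum_swap) (auto intro!: B.finsum_closed')
  also have "\<dots> = (\<Oplus>\<^bsub>B\<^esub>k\<in>{..<n}. phi (\<Oplus>\<^bsub>A\<^esub>i\<in>{..<n}. \<Oplus>\<^bsub>A\<^esub>j\<in>{..<n}.
       (cf b i \<otimes>\<^bsub>A\<^esub> cf b' j) \<otimes>\<^bsub>A\<^esub> cst i j k) \<otimes>\<^bsub>B\<^esub> es!k)"
  proof (intro finsum_cong_all)
    fix k assume k: "k \<in> {..<n}"
    have "phi (\<Oplus>\<^bsub>A\<^esub>i\<in>{..<n}. \<Oplus>\<^bsub>A\<^esub>j\<in>{..<n}. (cf b i \<otimes>\<^bsub>A\<^esub> cf b' j) \<otimes>\<^bsub>A\<^esub> cst i j k)
      = (\<Oplus>\<^bsub>B\<^esub>i\<in>{..<n}. \<Oplus>\<^bsub>B\<^esub>j\<in>{..<n}. phi ((cf b i \<otimes>\<^bsub>A\<^esub> cf b' j) \<otimes>\<^bsub>A\<^esub> cst i j k))"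
      using k assms by (auto simp: Pi_def intro!: finsum_cong_all A.finsum_closed')
    then show "(\<Oplus>\<^bsub>B\<^esub>i\<in>{..<n}. \<Oplus>\<^bsub>B\<^esub>j\<in>{..<n}.
       phi ((cf b i \<otimes>\<^bsub>A\<^esub> cf b' j) \<otimes>\<^bsub>A\<^esub> cst i j k) \<otimes>\<^bsub>B\<^esub> es!k) =
      phi (\<Oplus>\<^bsub>A\<^esub>i\<in>{..<n}. \<Oplus>\<^bsub>A\<^esub>j\<in>{..<n}. (cf b i \<otimes>\<^bsub>A\<^esub> cf b' j) \<otimes>\<^bsub>A\<^esub> cst i j k) \<otimes>\<^bsub>B\<^esub> es!k"
    proof -
      have "(\<Oplus>\<^bsub>B\<^esub>i\<in>{..<n}. \<Oplus>\<^bsub>B\<^esub>j\<in>{..<n}.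
       phi ((cf b i \<otimes>\<^bsub>A\<^esub> cf b' j) \<otimes>\<^bsub>A\<^esub> cst i j k) \<otimes>\<^bsub>B\<^esub> es!k) =
        (\<Oplus>\<^bsub>B\<^esub>i\<in>{..<n}. (\<Oplus>\<^bsub>B\<^esub>j\<in>{..<n}.
       phi ((cf b i \<otimes>\<^bsub>A\<^esub> cf b' j) \<otimes>\<^bsub>A\<^esub> cst i j k)) \<otimes>\<^bsub>B\<^esub> es!k)"
        using k assms by (intro finsum_cong_all B.finsum_ldistr'[symmetric]) auto
      also have "\<dots> = (\<Oplus>\<^bsub>B\<^esub>i\<in>{..<n}. \<Oplus>\<^bsub>B\<^esub>j\<in>{..<n}.
       phi ((cf b i \<otimes>\<^bsub>A\<^esub> cf b' j) \<otimes>\<^bsub>A\<^esub> cst i j k)) \<otimes>\<^bsub>B\<^esub> es!k"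
        using k assms by (intro B.finsum_ldistr'[symmetric]) (auto intro!: B.finsum_closed')
      finally show ?thesis using \<open>phi _ = _\<close> by simp
    qed
  qed
  finally show "b \<otimes>\<^bsub>B\<^esub> b' = (\<Oplus>\<^bsub>B\<^esub>k\<in>{..<n}. phi (\<Oplus>\<^bsub>A\<^esub>i\<in>{..<n}. \<Oplus>\<^bsub>A\<^esub>j\<in>{..<n}.
       (cf b i \<otimes>\<^bsub>A\<^esub> cf b' j) \<otimes>\<^bsub>A\<^esub> cst i j k) \<otimes>\<^bsub>B\<^esub> es!k)" .
qed

lemma cf_mult_basis:
  assumes b: "b \<in> carrier B" and m: "m < n" and k: "k < n"
  shows "cf (b \<otimes>\<^bsub>B\<^esub> es!m) k = (\<Oplus>\<^bsub>A\<^esub>i\<in>{..<n}. cf b i \<otimes>\<^bsub>A\<^esub> cst i m k)"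
proof -
  have "cf (b \<otimes>\<^bsub>B\<^esub> es!m) k =
     (\<Oplus>\<^bsub>A\<^esub>i\<in>{..<n}. \<Oplus>\<^bsub>A\<^esub>j\<in>{..<n}. (cf b i \<otimes>\<^bsub>A\<^esub> cf (es!m) j) \<otimes>\<^bsub>A\<^esub> cst i j k)"
    using assms by (intro cf_mult) auto
  also have "\<dots> = (\<Oplus>\<^bsub>A\<^esub>i\<in>{..<n}. \<Oplus>\<^bsub>A\<^esub>j\<in>{..<n}. if j = m then cf b i \<otimes>\<^bsub>A\<^esub> cst i j k else \<zero>\<^bsub>A\<^esub>)"
    using assms by (intro finsum_cong_all) (auto simp: cf_basis)
  also have "\<dots> = (\<Oplus>\<^bsub>A\<^esub>i\<in>{..<n}. cf b i \<otimes>\<^bsub>A\<^esub> cst i m k)"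
    using assms by (intro finsum_cong_all A.finsum_delta) auto
  finally show ?thesis .
qed

lemma cf_basis_mult:
  assumes b: "b \<in> carrier B" and m: "m < n" and k: "k < n"
  shows "cf (es!m \<otimes>\<^bsub>B\<^esub> b) k = (\<Oplus>\<^bsub>A\<^esub>j\<in>{..<n}. cf b j \<otimes>\<^bsub>A\<^esub> cst m j k)"
proof -
  have "cf (es!m \<otimes>\<^bsub>B\<^esub> b) k =
     (\<Oplus>\<^bsub>A\<^esub>i\<in>{..<n}. \<Oplus>\<^bsub>A\<^esub>j\<in>{..<n}. (cf (es!m) i \<otimes>\<^bsub>A\<^esub> cf b j) \<otimes>\<^bsub>A\<^esub> cst i j k)"
    using assms by (intro cf_mult) auto
  also have "\<dots> = (\<Oplus>\<^bsub>A\<^esub>i\<in>{..<n}. if i = m then (\<Oplus>\<^bsub>A\<^esub>j\<in>{..<n}. cf b j \<otimes>\<^bsub>A\<^esub> cst i j k) else \<zero>\<^bsub>A\<^esub>)"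
  proof (intro finsum_cong_all)
    fix i assume i: "i \<in> {..<n}"
    show "(\<Oplus>\<^bsub>A\<^esub>j\<in>{..<n}. (cf (es!m) i \<otimes>\<^bsub>A\<^esub> cf b j) \<otimes>\<^bsub>A\<^esub> cst i j k)
       = (if i = m then (\<Oplus>\<^bsub>A\<^esub>j\<in>{..<n}. cf b j \<otimes>\<^bsub>A\<^esub> cst i j k) else \<zero>\<^bsub>A\<^esub>)"
    proof (cases "i = m")
      case True then show ?thesis using assms i by (auto simp: cf_basis intro!: finsum_cong_all)
    next
      case False
      have "(\<Oplus>\<^bsub>A\<^esub>j\<in>{..<n}. (cf (es!m) i \<otimes>\<^bsub>A\<^esub> cf b j) \<otimes>\<^bsub>A\<^esub> cst i j k)
          = (\<Oplus>\<^bsub>A\<^esub>j\<in>{..<n}. \<zero>\<^bsub>A\<^esub>)"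
        using assms i False by (intro finsum_cong_all) (auto simp: cf_basis)
      then show ?thesis using False by (simp add: A.finsum_zero)
    qed
  qed
  also have "\<dots> = (\<Oplus>\<^bsub>A\<^esub>j\<in>{..<n}. cf b j \<otimes>\<^bsub>A\<^esub> cst m j k)"
    using assms by (intro A.finsum_delta) (auto intro!: A.finsum_closed')
  finally show ?thesis .
qed

context
  fixes d delta
  assumes d: "derivation A d" and delta: "derivation B delta"
    and compat: "\<And>a. a \<in> carrier A \<Longrightarrow> delta (phi a) = phi (d a)"
begin

lemma d_closed [simp]: "a \<in> carrier A \<Longrightarrow> d a \<in> carrier A"
  using d unfolding derivation_def by auto
lemma delta_closed [simp]: "b \<in> carrier B \<Longrightarrow> delta b \<in> carrier B"
  using delta unfolding derivation_def by auto
lemma delta_add: "b \<in> carrier B \<Longrightarrow> b' \<in> carrier B \<Longrightarrow> delta (b \<oplus>\<^bsub>B\<^esub> b') = delta b \<oplus>\<^bsub>B\<^esub> delta b'"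
  using delta unfolding derivation_def by auto
lemma delta_mult: "b \<in> carrier B \<Longrightarrow> b' \<in> carrier B \<Longrightarrow>
   delta (b \<otimes>\<^bsub>B\<^esub> b') = delta b \<otimes>\<^bsub>B\<^esub> b' \<oplus>\<^bsub>B\<^esub> b \<otimes>\<^bsub>B\<^esub> delta b'"
  using delta unfolding derivation_def by auto

abbreviation "dl j k \<equiv> cf (delta (es!j)) k"

lemma cf_deriv:
  assumes b: "b \<in> carrier B" and k: "k < n"
  shows "cf (delta b) k = d (cf b k) \<oplus>\<^bsub>A\<^esub> (\<Oplus>\<^bsub>A\<^esub>j\<in>{..<n}. cf b j \<otimes>\<^bsub>A\<^esub> dl j k)"
proof (rule cf_eqI[OF _ _ k])
  show "\<And>k. k < n \<Longrightarrow> d (cf b k) \<oplus>\<^bsub>A\<^esub> (\<Oplus>\<^bsub>A\<^esub>j\<in>{..<n}. cf b j \<otimes>\<^bsub>A\<^esub> dl j k) \<in> carrier A"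
    using b by (auto intro!: A.finsum_closed')
  have "delta b = delta (\<Oplus>\<^bsub>B\<^esub>j\<in>{..<n}. phi (cf b j) \<otimes>\<^bsub>B\<^esub> es!j)"
    using cf_repr b by auto
  also have "\<dots> = (\<Oplus>\<^bsub>B\<^esub>j\<in>{..<n}. delta (phi (cf b j) \<otimes>\<^bsub>B\<^esub> es!j))"
    using b by (intro B.deriv_finsum delta) auto
  also have "\<dots> = (\<Oplus>\<^bsub>B\<^esub>j\<in>{..<n}. phi (d (cf b j)) \<otimes>\<^bsub>B\<^esub> es!j \<oplus>\<^bsub>B\<^esub>
       phi (cf b j) \<otimes>\<^bsub>B\<^esub> (\<Oplus>\<^bsub>B\<^esub>k\<in>{..<n}. phi (dl j k) \<otimes>\<^bsub>B\<^esub> es!k))"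
    using b by (intro finsum_cong_all) (auto simp: delta_mult compat cf_repr[symmetric])
  also have "\<dots> = (\<Oplus>\<^bsub>B\<^esub>j\<in>{..<n}. phi (d (cf b j)) \<otimes>\<^bsub>B\<^esub> es!j) \<oplus>\<^bsub>B\<^esub>
       (\<Oplus>\<^bsub>B\<^esub>j\<in>{..<n}. phi (cf b j) \<otimes>\<^bsub>B\<^esub> (\<Oplus>\<^bsub>B\<^esub>k\<in>{..<n}. phi (dl j k) \<otimes>\<^bsub>B\<^esub> es!k))"
    using b by (intro B.finsum_addf') (auto intro!: B.finsum_closed')
  also have "(\<Oplus>\<^bsub>B\<^esub>j\<in>{..<n}. phi (cf b j) \<otimes>\<^bsub>B\<^esub> (\<Oplus>\<^bsub>B\<^esub>k\<in>{..<n}. phi (dl j k) \<otimes>\<^bsub>B\<^esub> es!k))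
      = (\<Oplus>\<^bsub>B\<^esub>j\<in>{..<n}. \<Oplus>\<^bsub>B\<^esub>k\<in>{..<n}. phi (cf b j \<otimes>\<^bsub>A\<^esub> dl j k) \<otimes>\<^bsub>B\<^esub> es!k)"
  proof (intro finsum_cong_all)
    fix j assume j: "j \<in> {..<n}"
    have "phi (cf b j) \<otimes>\<^bsub>B\<^esub> (\<Oplus>\<^bsub>B\<^esub>k\<in>{..<n}. phi (dl j k) \<otimes>\<^bsub>B\<^esub> es!k)
       = (\<Oplus>\<^bsub>B\<^esub>k\<in>{..<n}. phi (cf b j) \<otimes>\<^bsub>B\<^esub> (phi (dl j k) \<otimes>\<^bsub>B\<^esub> es!k))"
      using b j by (intro B.finsum_rdistr') auto
    also have "\<dots> = (\<Oplus>\<^bsub>B\<^esub>k\<in>{..<n}. phi (cf b j \<otimes>\<^bsub>A\<^esub> dl j k) \<otimes>\<^bsub>B\<^esub> es!k)"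
      using b j by (intro finsum_cong_all) (auto simp: B.m_assoc)
    finally show "phi (cf b j) \<otimes>\<^bsub>B\<^esub> (\<Oplus>\<^bsub>B\<^esub>k\<in>{..<n}. phi (dl j k) \<otimes>\<^bsub>B\<^esub> es!k)
       = (\<Oplus>\<^bsub>B\<^esub>k\<in>{..<n}. phi (cf b j \<otimes>\<^bsub>A\<^esub> dl j k) \<otimes>\<^bsub>B\<^esub> es!k)" .
  qed
  also have "\<dots> = (\<Oplus>\<^bsub>B\<^esub>k\<in>{..<n}. \<Oplus>\<^bsub>B\<^esub>j\<in>{..<n}. phi (cf b j \<otimes>\<^bsub>A\<^esub> dl j k) \<otimes>\<^bsub>B\<^esub> es!k)"
    using b by (intro B.finsum_swap) auto
  also have "\<dots> = (\<Oplus>\<^bsub>B\<^esub>k\<in>{..<n}. phi (\<Oplus>\<^bsub>A\<^esub>j\<in>{..<n}. cf b j \<otimes>\<^bsub>A\<^esub> dl j k) \<otimes>\<^bsub>B\<^esub> es!k)"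
  proof (intro finsum_cong_all)
    fix k assume k: "k \<in> {..<n}"
    have "(\<Oplus>\<^bsub>B\<^esub>j\<in>{..<n}. phi (cf b j \<otimes>\<^bsub>A\<^esub> dl j k) \<otimes>\<^bsub>B\<^esub> es!k)
      = (\<Oplus>\<^bsub>B\<^esub>j\<in>{..<n}. phi (cf b j \<otimes>\<^bsub>A\<^esub> dl j k)) \<otimes>\<^bsub>B\<^esub> es!k"
      using b k by (intro B.finsum_ldistr'[symmetric]) auto
    also have "(\<Oplus>\<^bsub>B\<^esub>j\<in>{..<n}. phi (cf b j \<otimes>\<^bsub>A\<^esub> dl j k)) = phi (\<Oplus>\<^bsub>A\<^esub>j\<in>{..<n}. cf b j \<otimes>\<^bsub>A\<^esub> dl j k)"
      using b k by (subst ph.hom_finsum) (auto simp: comp_def)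
    finally show "(\<Oplus>\<^bsub>B\<^esub>j\<in>{..<n}. phi (cf b j \<otimes>\<^bsub>A\<^esub> dl j k) \<otimes>\<^bsub>B\<^esub> es!k)
      = phi (\<Oplus>\<^bsub>A\<^esub>j\<in>{..<n}. cf b j \<otimes>\<^bsub>A\<^esub> dl j k) \<otimes>\<^bsub>B\<^esub> es!k" .
  qed
  also have "(\<Oplus>\<^bsub>B\<^esub>j\<in>{..<n}. phi (d (cf b j)) \<otimes>\<^bsub>B\<^esub> es!j) \<oplus>\<^bsub>B\<^esub>
       (\<Oplus>\<^bsub>B\<^esub>k\<in>{..<n}. phi (\<Oplus>\<^bsub>A\<^esub>j\<in>{..<n}. cf b j \<otimes>\<^bsub>A\<^esub> dl j k) \<otimes>\<^bsub>B\<^esub> es!k)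
     = (\<Oplus>\<^bsub>B\<^esub>k\<in>{..<n}. phi (d (cf b k) \<oplus>\<^bsub>A\<^esub> (\<Oplus>\<^bsub>A\<^esub>j\<in>{..<n}. cf b j \<otimes>\<^bsub>A\<^esub> dl j k)) \<otimes>\<^bsub>B\<^esub> es!k)"
  proof -
    have "(\<Oplus>\<^bsub>B\<^esub>j\<in>{..<n}. phi (d (cf b j)) \<otimes>\<^bsub>B\<^esub> es!j) \<oplus>\<^bsub>B\<^esub>
       (\<Oplus>\<^bsub>B\<^esub>k\<in>{..<n}. phi (\<Oplus>\<^bsub>A\<^esub>j\<in>{..<n}. cf b j \<otimes>\<^bsub>A\<^esub> dl j k) \<otimes>\<^bsub>B\<^esub> es!k)
     = (\<Oplus>\<^bsub>B\<^esub>k\<in>{..<n}. phi (d (cf b k)) \<otimes>\<^bsub>B\<^esub> es!k \<oplus>\<^bsub>B\<^esub> phi (\<Oplus>\<^bsub>A\<^esub>j\<in>{..<n}. cf b j \<otimes>\<^bsub>A\<^esub> dl j k) \<otimes>\<^bsub>B\<^esub> es!k)"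
      using b by (intro B.finsum_addf'[symmetric]) (auto intro!: A.finsum_closed')
    also have "\<dots> = (\<Oplus>\<^bsub>B\<^esub>k\<in>{..<n}. phi (d (cf b k) \<oplus>\<^bsub>A\<^esub> (\<Oplus>\<^bsub>A\<^esub>j\<in>{..<n}. cf b j \<otimes>\<^bsub>A\<^esub> dl j k)) \<otimes>\<^bsub>B\<^esub> es!k)"
      using b by (intro finsum_cong_all) (auto intro!: A.finsum_closed' simp: B.l_distr)
    finally show ?thesis .
  qed
  finally show "delta b = (\<Oplus>\<^bsub>B\<^esub>k\<in>{..<n}. phi (d (cf b k) \<oplus>\<^bsub>A\<^esub> (\<Oplus>\<^bsub>A\<^esub>j\<in>{..<n}. cf b j \<otimes>\<^bsub>A\<^esub> dl j k)) \<otimes>\<^bsub>B\<^esub> es!k)" .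
qed

lemma key_A:
  assumes i: "i < n" and j: "j < n" and k: "k < n"
  shows "(\<Oplus>\<^bsub>A\<^esub>l\<in>{..<n}. dl j l \<otimes>\<^bsub>A\<^esub> cst i l k) \<oplus>\<^bsub>A\<^esub> (\<Oplus>\<^bsub>A\<^esub>l\<in>{..<n}. dl i l \<otimes>\<^bsub>A\<^esub> cst l j k)
     = d (cst i j k) \<oplus>\<^bsub>A\<^esub> (\<Oplus>\<^bsub>A\<^esub>m\<in>{..<n}. cst i j m \<otimes>\<^bsub>A\<^esub> dl m k)"
proof -
  have "cf (delta (es!i \<otimes>\<^bsub>B\<^esub> es!j)) k = d (cst i j k) \<oplus>\<^bsub>A\<^esub> (\<Oplus>\<^bsub>A\<^esub>m\<in>{..<n}. cst i j m \<otimes>\<^bsub>A\<^esub> dl m k)"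
    using assms by (intro cf_deriv) auto
  moreover have "cf (delta (es!i \<otimes>\<^bsub>B\<^esub> es!j)) k
     = cf (delta (es!i) \<otimes>\<^bsub>B\<^esub> es!j) k \<oplus>\<^bsub>A\<^esub> cf (es!i \<otimes>\<^bsub>B\<^esub> delta (es!j)) k"
    using assms by (simp add: delta_mult cf_add)
  moreover have "cf (delta (es!i) \<otimes>\<^bsub>B\<^esub> es!j) k = (\<Oplus>\<^bsub>A\<^esub>l\<in>{..<n}. dl i l \<otimes>\<^bsub>A\<^esub> cst l j k)"
    using assms by (intro cf_mult_basis) auto
  moreover have "cf (es!i \<otimes>\<^bsub>B\<^esub> delta (es!j)) k = (\<Oplus>\<^bsub>A\<^esub>l\<in>{..<n}. dl j l \<otimes>\<^bsub>A\<^esub> cst i l k)"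
    using assms by (intro cf_basis_mult) auto
  ultimately show ?thesis using assms
    by (metis (no_types, lifting) A.a_comm A.finsum_closed' A.m_closed cst_closed cf_closed delta_closed es_closed lessThan_iff)
qed

end

end



locale tsetup = bsetup A B phi es for A :: "'a ring" and B :: "'b ring" and phi es +
  fixes W :: "'w ring" and P :: "'a \<Rightarrow> 'w"
  assumes cW: "cring W" and P: "P \<in> ring_hom A W"
begin

sublocale W: cring W by (rule cW)
sublocale pw: ring_hom_cring A W P by unfold_locales (rule P)

abbreviation "T \<equiv> tensor A B phi es W P"

lemma T_carrier: "carrier T = {..<n} \<rightarrow>\<^sub>E carrier W"
  by (simp add: tensor_def)
lemma T_mult: "mult T u v = (\<lambda>k\<in>{..<n}. \<Oplus>\<^bsub>W\<^esub>i\<in>{..<n}. \<Oplus>\<^bsub>W\<^esub>j\<in>{..<n}. (u i \<otimes>\<^bsub>W\<^esub> v j) \<otimes>\<^bsub>W\<^esub> P (cst i j k))"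
  by (simp add: tensor_def)
lemma T_add: "add T u v = (\<lambda>k\<in>{..<n}. u k \<oplus>\<^bsub>W\<^esub> v k)"
  by (simp add: tensor_def)
lemma T_one: "one T = (\<lambda>k\<in>{..<n}. P (cf \<one>\<^bsub>B\<^esub> k))"
  by (simp add: tensor_def)
lemma T_zero: "zero T = (\<lambda>k\<in>{..<n}. \<zero>\<^bsub>W\<^esub>)"
  by (simp add: tensor_def)

lemma vec_closed [simp]: "a \<in> {..<n} \<rightarrow>\<^sub>E carrier W \<Longrightarrow> i < n \<Longrightarrow> a i \<in> carrier W"
  by auto

lemma vec_eqI:
  assumes "a \<in> {..<n} \<rightarrow>\<^sub>E carrier W" "b \<in> {..<n} \<rightarrow>\<^sub>E carrier W" "\<And>k. k < n \<Longrightarrow> a k = b k"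
  shows "a = b"
  using assms by (intro PiE_ext[of a "{..<n}" "\<lambda>_. carrier W"]) auto

lemma T_mult_closed [simp]:
  "u \<in> {..<n} \<rightarrow>\<^sub>E carrier W \<Longrightarrow> v \<in> {..<n} \<rightarrow>\<^sub>E carrier W \<Longrightarrow> mult T u v \<in> {..<n} \<rightarrow>\<^sub>E carrier W"
  by (auto simp: T_mult intro!: W.finsum_closed')

lemma T_add_closed [simp]:
  "u \<in> {..<n} \<rightarrow>\<^sub>E carrier W \<Longrightarrow> v \<in> {..<n} \<rightarrow>\<^sub>E carrier W \<Longrightarrow> add T u v \<in> {..<n} \<rightarrow>\<^sub>E carrier W"
  by (auto simp: T_add)

lemma T_mult_k: "k < n \<Longrightarrow> mult T u v k = (\<Oplus>\<^bsub>W\<^esub>i\<in>{..<n}. \<Oplus>\<^bsub>W\<^esub>j\<in>{..<n}. (u i \<otimes>\<^bsub>W\<^esub> v j) \<otimes>\<^bsub>W\<^esub> P (cst i j k))"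
  by (simp add: T_mult)
lemma T_add_k: "k < n \<Longrightarrow> add T u v k = u k \<oplus>\<^bsub>W\<^esub> v k"
  by (simp add: T_add)

definition sc :: "'w \<Rightarrow> 'b \<Rightarrow> nat \<Rightarrow> 'w" where
  "sc x b = (\<lambda>k\<in>{..<n}. x \<otimes>\<^bsub>W\<^esub> P (cf b k))"

lemma sc_closed [simp]: "x \<in> carrier W \<Longrightarrow> b \<in> carrier B \<Longrightarrow> sc x b \<in> {..<n} \<rightarrow>\<^sub>E carrier W"
  by (auto simp: sc_def)

lemma sc_k: "k < n \<Longrightarrow> sc x b k = x \<otimes>\<^bsub>W\<^esub> P (cf b k)"
  by (simp add: sc_def)

lemma inl_sc: "tensor_inl A B phi es W P x = sc x \<one>\<^bsub>B\<^esub>"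
  by (simp add: tensor_inl_def sc_def)

lemma inr_sc: "tensor_inr A B phi es W P b = (if b \<in> carrier B then sc \<one>\<^bsub>W\<^esub> b else tensor_inr A B phi es W P b)"
  by (auto simp: tensor_inr_def sc_def)

lemma inr_sc': "b \<in> carrier B \<Longrightarrow> tensor_inr A B phi es W P b = sc \<one>\<^bsub>W\<^esub> b"
  by (auto simp: tensor_inr_def sc_def)

lemma one_sc: "one T = sc \<one>\<^bsub>W\<^esub> \<one>\<^bsub>B\<^esub>"
  by (auto simp: T_one sc_def)

lemma W_scal_sum2:
  assumes "z \<in> carrier W" "\<And>i j. i < n \<Longrightarrow> j < n \<Longrightarrow> F i j \<in> carrier A"
  shows "(\<Oplus>\<^bsub>W\<^esub>i\<in>{..<n}. \<Oplus>\<^bsub>W\<^esub>j\<in>{..<n}. z \<otimes>\<^bsub>W\<^esub> P (F i j))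
    = z \<otimes>\<^bsub>W\<^esub> P (\<Oplus>\<^bsub>A\<^esub>i\<in>{..<n}. \<Oplus>\<^bsub>A\<^esub>j\<in>{..<n}. F i j)"
proof -
  have "P (\<Oplus>\<^bsub>A\<^esub>i\<in>{..<n}. \<Oplus>\<^bsub>A\<^esub>j\<in>{..<n}. F i j) = (\<Oplus>\<^bsub>W\<^esub>i\<in>{..<n}. P (\<Oplus>\<^bsub>A\<^esub>j\<in>{..<n}. F i j))"
    using assms by (subst pw.hom_finsum) (auto simp: comp_def intro!: A.finsum_closed')
  also have "\<dots> = (\<Oplus>\<^bsub>W\<^esub>i\<in>{..<n}. \<Oplus>\<^bsub>W\<^esub>j\<in>{..<n}. P (F i j))"
    using assms by (intro finsum_cong_all) (subst pw.hom_finsum, auto simp: comp_def)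
  finally have "z \<otimes>\<^bsub>W\<^esub> P (\<Oplus>\<^bsub>A\<^esub>i\<in>{..<n}. \<Oplus>\<^bsub>A\<^esub>j\<in>{..<n}. F i j) = z \<otimes>\<^bsub>W\<^esub> (\<Oplus>\<^bsub>W\<^esub>i\<in>{..<n}. \<Oplus>\<^bsub>W\<^esub>j\<in>{..<n}. P (F i j))"
    by simp
  also have "\<dots> = (\<Oplus>\<^bsub>W\<^esub>i\<in>{..<n}. z \<otimes>\<^bsub>W\<^esub> (\<Oplus>\<^bsub>W\<^esub>j\<in>{..<n}. P (F i j)))"
    using assms by (intro W.finsum_rdistr') (auto intro!: W.finsum_closed')
  also have "\<dots> = (\<Oplus>\<^bsub>W\<^esub>i\<in>{..<n}. \<Oplus>\<^bsub>W\<^esub>j\<in>{..<n}. z \<otimes>\<^bsub>W\<^esub> P (F i j))"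
    using assms by (intro finsum_cong_all W.finsum_rdistr') auto
  finally show ?thesis by simp
qed

lemma sc_mult:
  assumes "x \<in> carrier W" "y \<in> carrier W" "b \<in> carrier B" "b' \<in> carrier B"
  shows "mult T (sc x b) (sc y b') = sc (x \<otimes>\<^bsub>W\<^esub> y) (b \<otimes>\<^bsub>B\<^esub> b')"
proof (rule vec_eqI)
  fix k assume k: "k < n"
  have "mult T (sc x b) (sc y b') k = (\<Oplus>\<^bsub>W\<^esub>i\<in>{..<n}. \<Oplus>\<^bsub>W\<^esub>j\<in>{..<n}.
      (x \<otimes>\<^bsub>W\<^esub> y) \<otimes>\<^bsub>W\<^esub> P ((cf b i \<otimes>\<^bsub>A\<^esub> cf b' j) \<otimes>\<^bsub>A\<^esub> cst i j k))"
    using assms k by (auto simp: T_mult_k sc_k W.m_ac intro!: finsum_cong_all)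
  also have "\<dots> = (x \<otimes>\<^bsub>W\<^esub> y) \<otimes>\<^bsub>W\<^esub> P (cf (b \<otimes>\<^bsub>B\<^esub> b') k)"
    using assms k by (subst W_scal_sum2) (auto simp: cf_mult[of b b' k, symmetric])
  finally show "mult T (sc x b) (sc y b') k = sc (x \<otimes>\<^bsub>W\<^esub> y) (b \<otimes>\<^bsub>B\<^esub> b') k"
    using k by (simp add: sc_k)
qed (use assms in auto)

lemma sc_add_left:
  assumes "x \<in> carrier W" "y \<in> carrier W" "b \<in> carrier B"
  shows "add T (sc x b) (sc y b) = sc (x \<oplus>\<^bsub>W\<^esub> y) b"
  using assms by (intro vec_eqI) (auto simp: T_add_k sc_k W.l_distr)

lemma sc_add_right:
  assumes "x \<in> carrier W" "b \<in> carrier B" "b' \<in> carrier B"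
  shows "add T (sc x b) (sc x b') = sc x (b \<oplus>\<^bsub>B\<^esub> b')"
  using assms by (intro vec_eqI) (auto simp: T_add_k sc_k W.r_distr cf_add)

lemma sc_zero_right: "x \<in> carrier W \<Longrightarrow> sc x \<zero>\<^bsub>B\<^esub> = zero T"
  by (auto simp: sc_def T_zero cf_zero)

lemma sc_zero_left: "b \<in> carrier B \<Longrightarrow> sc \<zero>\<^bsub>W\<^esub> b = zero T"
  by (auto simp: sc_def T_zero)

lemma T_zero_closed [simp]: "zero T \<in> {..<n} \<rightarrow>\<^sub>E carrier W"
  by (auto simp: T_zero)

lemma T_add_zero: "v \<in> {..<n} \<rightarrow>\<^sub>E carrier W \<Longrightarrow> add T v (zero T) = v"
  by (intro vec_eqI) (auto simp: T_add_k T_zero)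

lemma T_zero_add: "v \<in> {..<n} \<rightarrow>\<^sub>E carrier W \<Longrightarrow> add T (zero T) v = v"
  by (intro vec_eqI) (auto simp: T_add_k T_zero)

lemma inl_hom: "tensor_inl A B phi es W P \<in> ring_hom W T"
proof (rule ring_hom_memI)
  fix x y assume xy: "x \<in> carrier W" "y \<in> carrier W"
  show "tensor_inl A B phi es W P (x \<otimes>\<^bsub>W\<^esub> y) = mult T (tensor_inl A B phi es W P x) (tensor_inl A B phi es W P y)"
    using xy by (simp add: inl_sc sc_mult)
  show "tensor_inl A B phi es W P (x \<oplus>\<^bsub>W\<^esub> y) = add T (tensor_inl A B phi es W P x) (tensor_inl A B phi es W P y)"
    using xy by (simp add: inl_sc sc_add_left)
qed (auto simp: inl_sc one_sc T_carrier)

lemma inr_hom: "tensor_inr A B phi es W P \<in> ring_hom B T"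
proof (rule ring_hom_memI)
  fix x y assume xy: "x \<in> carrier B" "y \<in> carrier B"
  show "tensor_inr A B phi es W P (x \<otimes>\<^bsub>B\<^esub> y) = mult T (tensor_inr A B phi es W P x) (tensor_inr A B phi es W P y)"
    using xy by (simp add: inr_sc' sc_mult)
  show "tensor_inr A B phi es W P (x \<oplus>\<^bsub>B\<^esub> y) = add T (tensor_inr A B phi es W P x) (tensor_inr A B phi es W P y)"
    using xy by (simp add: inr_sc' sc_add_right)
qed (auto simp: inr_sc' one_sc T_carrier)

lemma T_l_distr:
  assumes "a \<in> {..<n} \<rightarrow>\<^sub>E carrier W" "a' \<in> {..<n} \<rightarrow>\<^sub>E carrier W" "b \<in> {..<n} \<rightarrow>\<^sub>E carrier W"
  shows "mult T (add T a a') b = add T (mult T a b) (mult T a' b)"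
proof (rule vec_eqI)
  fix k assume k: "k < n"
  have "mult T (add T a a') b k = (\<Oplus>\<^bsub>W\<^esub>i\<in>{..<n}. \<Oplus>\<^bsub>W\<^esub>j\<in>{..<n}.
     (a i \<otimes>\<^bsub>W\<^esub> b j) \<otimes>\<^bsub>W\<^esub> P (cst i j k) \<oplus>\<^bsub>W\<^esub> (a' i \<otimes>\<^bsub>W\<^esub> b j) \<otimes>\<^bsub>W\<^esub> P (cst i j k))"
    using assms k unfolding T_mult_k[OF k] by (intro finsum_cong_all) (simp add: T_add_k W.l_distr)
  also have "\<dots> = (\<Oplus>\<^bsub>W\<^esub>i\<in>{..<n}. (\<Oplus>\<^bsub>W\<^esub>j\<in>{..<n}. (a i \<otimes>\<^bsub>W\<^esub> b j) \<otimes>\<^bsub>W\<^esub> P (cst i j k))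
       \<oplus>\<^bsub>W\<^esub> (\<Oplus>\<^bsub>W\<^esub>j\<in>{..<n}. (a' i \<otimes>\<^bsub>W\<^esub> b j) \<otimes>\<^bsub>W\<^esub> P (cst i j k)))"
    using assms k by (intro finsum_cong_all W.finsum_addf') auto
  also have "\<dots> = mult T a b k \<oplus>\<^bsub>W\<^esub> mult T a' b k"
    using assms k by (simp only: T_mult_k, intro W.finsum_addf') (auto intro!: W.finsum_closed')
  finally show "mult T (add T a a') b k = add T (mult T a b) (mult T a' b) k"
    using k by (simp add: T_add_k)
qed (use assms in auto)

lemma T_r_distr:
  assumes "a \<in> {..<n} \<rightarrow>\<^sub>E carrier W" "b \<in> {..<n} \<rightarrow>\<^sub>E carrier W" "b' \<in> {..<n} \<rightarrow>\<^sub>E carrier W"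
  shows "mult T a (add T b b') = add T (mult T a b) (mult T a b')"
proof (rule vec_eqI)
  fix k assume k: "k < n"
  have "mult T a (add T b b') k = (\<Oplus>\<^bsub>W\<^esub>i\<in>{..<n}. \<Oplus>\<^bsub>W\<^esub>j\<in>{..<n}.
     (a i \<otimes>\<^bsub>W\<^esub> b j) \<otimes>\<^bsub>W\<^esub> P (cst i j k) \<oplus>\<^bsub>W\<^esub> (a i \<otimes>\<^bsub>W\<^esub> b' j) \<otimes>\<^bsub>W\<^esub> P (cst i j k))"
    using assms k unfolding T_mult_k[OF k] by (intro finsum_cong_all) (simp add: T_add_k W.l_distr W.r_distr)
  also have "\<dots> = (\<Oplus>\<^bsub>W\<^esub>i\<in>{..<n}. (\<Oplus>\<^bsub>W\<^esub>j\<in>{..<n}. (a i \<otimes>\<^bsub>W\<^esub> b j) \<otimes>\<^bsub>W\<^esub> P (cst i j k))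
       \<oplus>\<^bsub>W\<^esub> (\<Oplus>\<^bsub>W\<^esub>j\<in>{..<n}. (a i \<otimes>\<^bsub>W\<^esub> b' j) \<otimes>\<^bsub>W\<^esub> P (cst i j k)))"
    using assms k by (intro finsum_cong_all W.finsum_addf') auto
  also have "\<dots> = mult T a b k \<oplus>\<^bsub>W\<^esub> mult T a b' k"
    using assms k by (simp only: T_mult_k, intro W.finsum_addf') (auto intro!: W.finsum_closed')
  finally show "mult T a (add T b b') k = add T (mult T a b) (mult T a b') k"
    using k by (simp add: T_add_k)
qed (use assms in auto)

end



lemma finsum_cong_simp:
  "S = S' \<Longrightarrow> (\<And>i. i \<in> S' =simp=> f i = g i) \<Longrightarrow> finsum R f S = finsum R g S'"
  unfolding simp_implies_def by (auto intro: finsum_cong_all)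

context tsetup
begin

definition Lv :: "('b \<Rightarrow> 'b) \<Rightarrow> (nat \<Rightarrow> 'w) \<Rightarrow> nat \<Rightarrow> 'w" where
  "Lv dlt a = (\<lambda>k\<in>{..<n}. \<Oplus>\<^bsub>W\<^esub>j\<in>{..<n}. a j \<otimes>\<^bsub>W\<^esub> P (cf (dlt (es!j)) k))"

definition Dv :: "('w \<Rightarrow> 'w) \<Rightarrow> (nat \<Rightarrow> 'w) \<Rightarrow> nat \<Rightarrow> 'w" where
  "Dv D a = (\<lambda>k\<in>{..<n}. D (a k))"

definition E0 :: "('w \<Rightarrow> 'w) \<Rightarrow> ('b \<Rightarrow> 'b) \<Rightarrow> (nat \<Rightarrow> 'w) \<Rightarrow> nat \<Rightarrow> 'w" where
  "E0 D dlt a = (if a \<in> carrier T then add T (Dv D a) (Lv dlt a) else undefined)"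

definition bil :: "(nat \<Rightarrow> 'w) \<Rightarrow> (nat \<Rightarrow> 'w) \<Rightarrow> (nat \<Rightarrow> nat \<Rightarrow> 'a) \<Rightarrow> 'w" where
  "bil a b X = (\<Oplus>\<^bsub>W\<^esub>i\<in>{..<n}. \<Oplus>\<^bsub>W\<^esub>j\<in>{..<n}. (a i \<otimes>\<^bsub>W\<^esub> b j) \<otimes>\<^bsub>W\<^esub> P (X i j))"

lemma dist_helper:
  assumes "x \<in> carrier W" "z \<in> carrier W" "\<And>j. j < n \<Longrightarrow> f j \<in> carrier W"
  shows "(x \<otimes>\<^bsub>W\<^esub> (\<Oplus>\<^bsub>W\<^esub>j\<in>{..<n}. f j)) \<otimes>\<^bsub>W\<^esub> z = (\<Oplus>\<^bsub>W\<^esub>j\<in>{..<n}. (x \<otimes>\<^bsub>W\<^esub> f j) \<otimes>\<^bsub>W\<^esub> z)"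
proof -
  have "x \<otimes>\<^bsub>W\<^esub> (\<Oplus>\<^bsub>W\<^esub>j\<in>{..<n}. f j) = (\<Oplus>\<^bsub>W\<^esub>j\<in>{..<n}. x \<otimes>\<^bsub>W\<^esub> f j)"
    using assms by (intro W.finsum_rdistr') auto
  moreover have "(\<Oplus>\<^bsub>W\<^esub>j\<in>{..<n}. x \<otimes>\<^bsub>W\<^esub> f j) \<otimes>\<^bsub>W\<^esub> z = (\<Oplus>\<^bsub>W\<^esub>j\<in>{..<n}. (x \<otimes>\<^bsub>W\<^esub> f j) \<otimes>\<^bsub>W\<^esub> z)"
    using assms by (intro W.finsum_ldistr') auto
  ultimately show ?thesis by simp
qed

lemma dist_helper2:
  assumes "x \<in> carrier W" "z \<in> carrier W" "\<And>j. j < n \<Longrightarrow> f j \<in> carrier W"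
  shows "((\<Oplus>\<^bsub>W\<^esub>j\<in>{..<n}. f j) \<otimes>\<^bsub>W\<^esub> x) \<otimes>\<^bsub>W\<^esub> z = (\<Oplus>\<^bsub>W\<^esub>j\<in>{..<n}. (f j \<otimes>\<^bsub>W\<^esub> x) \<otimes>\<^bsub>W\<^esub> z)"
proof -
  have "(\<Oplus>\<^bsub>W\<^esub>j\<in>{..<n}. f j) \<otimes>\<^bsub>W\<^esub> x = (\<Oplus>\<^bsub>W\<^esub>j\<in>{..<n}. f j \<otimes>\<^bsub>W\<^esub> x)"
    using assms by (intro W.finsum_ldistr') auto
  moreover have "(\<Oplus>\<^bsub>W\<^esub>j\<in>{..<n}. f j \<otimes>\<^bsub>W\<^esub> x) \<otimes>\<^bsub>W\<^esub> z = (\<Oplus>\<^bsub>W\<^esub>j\<in>{..<n}. (f j \<otimes>\<^bsub>W\<^esub> x) \<otimes>\<^bsub>W\<^esub> z)"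
    using assms by (intro W.finsum_ldistr') auto
  ultimately show ?thesis by simp
qed

lemma sum2_add:
  assumes "\<And>i j. i < n \<Longrightarrow> j < n \<Longrightarrow> F i j \<in> carrier W"
      and "\<And>i j. i < n \<Longrightarrow> j < n \<Longrightarrow> G i j \<in> carrier W"
  shows "(\<Oplus>\<^bsub>W\<^esub>i\<in>{..<n}. \<Oplus>\<^bsub>W\<^esub>j\<in>{..<n}. F i j \<oplus>\<^bsub>W\<^esub> G i j)
     = (\<Oplus>\<^bsub>W\<^esub>i\<in>{..<n}. \<Oplus>\<^bsub>W\<^esub>j\<in>{..<n}. F i j) \<oplus>\<^bsub>W\<^esub> (\<Oplus>\<^bsub>W\<^esub>i\<in>{..<n}. \<Oplus>\<^bsub>W\<^esub>j\<in>{..<n}. G i j)"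
proof -
  have "(\<Oplus>\<^bsub>W\<^esub>i\<in>{..<n}. \<Oplus>\<^bsub>W\<^esub>j\<in>{..<n}. F i j \<oplus>\<^bsub>W\<^esub> G i j)
     = (\<Oplus>\<^bsub>W\<^esub>i\<in>{..<n}. (\<Oplus>\<^bsub>W\<^esub>j\<in>{..<n}. F i j) \<oplus>\<^bsub>W\<^esub> (\<Oplus>\<^bsub>W\<^esub>j\<in>{..<n}. G i j))"
    using assms by (intro finsum_cong_all W.finsum_addf') auto
  also have "\<dots> = (\<Oplus>\<^bsub>W\<^esub>i\<in>{..<n}. \<Oplus>\<^bsub>W\<^esub>j\<in>{..<n}. F i j) \<oplus>\<^bsub>W\<^esub> (\<Oplus>\<^bsub>W\<^esub>i\<in>{..<n}. \<Oplus>\<^bsub>W\<^esub>j\<in>{..<n}. G i j)"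
    using assms by (intro W.finsum_addf') (auto intro!: W.finsum_closed')
  finally show ?thesis .
qed

lemma bil_closed [simp]:
  assumes "a \<in> {..<n} \<rightarrow>\<^sub>E carrier W" "b \<in> {..<n} \<rightarrow>\<^sub>E carrier W"
    "\<And>i j. i < n \<Longrightarrow> j < n \<Longrightarrow> X i j \<in> carrier A"
  shows "bil a b X \<in> carrier W"
  using assms unfolding bil_def by (auto intro!: W.finsum_closed')

lemma bil_add:
  assumes "a \<in> {..<n} \<rightarrow>\<^sub>E carrier W" "b \<in> {..<n} \<rightarrow>\<^sub>E carrier W"
    "\<And>i j. i < n \<Longrightarrow> j < n \<Longrightarrow> X i j \<in> carrier A"
    "\<And>i j. i < n \<Longrightarrow> j < n \<Longrightarrow> Y i j \<in> carrier A"
  shows "bil a b X \<oplus>\<^bsub>W\<^esub> bil a b Y = bil a b (\<lambda>i j. X i j \<oplus>\<^bsub>A\<^esub> Y i j)"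
  unfolding bil_def
  using assms by (subst sum2_add[symmetric]) (auto intro!: finsum_cong_all simp: W.r_distr)

lemma bil_cong:
  assumes "\<And>i j. i < n \<Longrightarrow> j < n \<Longrightarrow> X i j = Y i j"
  shows "bil a b X = bil a b Y"
  unfolding bil_def using assms by (auto intro!: finsum_cong_all)

lemma bil_sum:
  assumes "a \<in> {..<n} \<rightarrow>\<^sub>E carrier W" "b \<in> {..<n} \<rightarrow>\<^sub>E carrier W"
    "\<And>i j l. i < n \<Longrightarrow> j < n \<Longrightarrow> l < n \<Longrightarrow> F i j l \<in> carrier A"
  shows "bil a b (\<lambda>i j. \<Oplus>\<^bsub>A\<^esub>l\<in>{..<n}. F i j l)
     = (\<Oplus>\<^bsub>W\<^esub>i\<in>{..<n}. \<Oplus>\<^bsub>W\<^esub>j\<in>{..<n}. \<Oplus>\<^bsub>W\<^esub>l\<in>{..<n}. (a i \<otimes>\<^bsub>W\<^esub> b j) \<otimes>\<^bsub>W\<^esub> P (F i j l))"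
  unfolding bil_def
proof (intro finsum_cong_all)
  fix i j assume ij: "i \<in> {..<n}" "j \<in> {..<n}"
  have "P (\<Oplus>\<^bsub>A\<^esub>l\<in>{..<n}. F i j l) = (\<Oplus>\<^bsub>W\<^esub>l\<in>{..<n}. P (F i j l))"
    using assms ij by (subst pw.hom_finsum) (auto simp: comp_def)
  then have "(a i \<otimes>\<^bsub>W\<^esub> b j) \<otimes>\<^bsub>W\<^esub> P (\<Oplus>\<^bsub>A\<^esub>l\<in>{..<n}. F i j l) =
         (a i \<otimes>\<^bsub>W\<^esub> b j) \<otimes>\<^bsub>W\<^esub> (\<Oplus>\<^bsub>W\<^esub>l\<in>{..<n}. P (F i j l))" by simp
  also have "\<dots> = (\<Oplus>\<^bsub>W\<^esub>l\<in>{..<n}. (a i \<otimes>\<^bsub>W\<^esub> b j) \<otimes>\<^bsub>W\<^esub> P (F i j l))"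
    using assms ij by (intro W.finsum_rdistr') auto
  finally show "(a i \<otimes>\<^bsub>W\<^esub> b j) \<otimes>\<^bsub>W\<^esub> P (\<Oplus>\<^bsub>A\<^esub>l\<in>{..<n}. F i j l) =
         (\<Oplus>\<^bsub>W\<^esub>l\<in>{..<n}. (a i \<otimes>\<^bsub>W\<^esub> b j) \<otimes>\<^bsub>W\<^esub> P (F i j l))" .
qed

lemma Lv_closed [simp]:
  assumes "a \<in> {..<n} \<rightarrow>\<^sub>E carrier W" "\<And>b. b \<in> carrier B \<Longrightarrow> dlt b \<in> carrier B"
  shows "Lv dlt a \<in> {..<n} \<rightarrow>\<^sub>E carrier W"
  using assms unfolding Lv_def by (auto intro!: W.finsum_closed')

lemma Lv_k: "k < n \<Longrightarrow> Lv dlt a k = (\<Oplus>\<^bsub>W\<^esub>j\<in>{..<n}. a j \<otimes>\<^bsub>W\<^esub> P (cf (dlt (es!j)) k))"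
  by (simp add: Lv_def)

lemma Dv_k: "k < n \<Longrightarrow> Dv D a k = D (a k)"
  by (simp add: Dv_def)

context
  fixes dlt
  assumes dlt_cl: "\<And>b. b \<in> carrier B \<Longrightarrow> dlt b \<in> carrier B"
begin

lemma T1:
  assumes a: "a \<in> {..<n} \<rightarrow>\<^sub>E carrier W" and b: "b \<in> {..<n} \<rightarrow>\<^sub>E carrier W" and k: "k < n"
  shows "mult T a (Lv dlt b) k = bil a b (\<lambda>i j. \<Oplus>\<^bsub>A\<^esub>l\<in>{..<n}. cf (dlt (es!j)) l \<otimes>\<^bsub>A\<^esub> cst i l k)"
proof -
  have "mult T a (Lv dlt b) k = (\<Oplus>\<^bsub>W\<^esub>i\<in>{..<n}. \<Oplus>\<^bsub>W\<^esub>l\<in>{..<n}.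
      (a i \<otimes>\<^bsub>W\<^esub> (\<Oplus>\<^bsub>W\<^esub>j\<in>{..<n}. b j \<otimes>\<^bsub>W\<^esub> P (cf (dlt (es!j)) l))) \<otimes>\<^bsub>W\<^esub> P (cst i l k))"
    using k by (simp add: T_mult_k Lv_def cong: finsum_cong_simp)
  also have "\<dots> = (\<Oplus>\<^bsub>W\<^esub>i\<in>{..<n}. \<Oplus>\<^bsub>W\<^esub>l\<in>{..<n}. \<Oplus>\<^bsub>W\<^esub>j\<in>{..<n}.
      (a i \<otimes>\<^bsub>W\<^esub> b j) \<otimes>\<^bsub>W\<^esub> P (cf (dlt (es!j)) l \<otimes>\<^bsub>A\<^esub> cst i l k))"
  proof (intro finsum_cong_all)
    fix i l assume il: "i \<in> {..<n}" "l \<in> {..<n}"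
    have "(a i \<otimes>\<^bsub>W\<^esub> (\<Oplus>\<^bsub>W\<^esub>j\<in>{..<n}. b j \<otimes>\<^bsub>W\<^esub> P (cf (dlt (es!j)) l))) \<otimes>\<^bsub>W\<^esub> P (cst i l k)
      = (\<Oplus>\<^bsub>W\<^esub>j\<in>{..<n}. (a i \<otimes>\<^bsub>W\<^esub> (b j \<otimes>\<^bsub>W\<^esub> P (cf (dlt (es!j)) l))) \<otimes>\<^bsub>W\<^esub> P (cst i l k))"
      using a b k il dlt_cl by (intro dist_helper) auto
    also have "\<dots> = (\<Oplus>\<^bsub>W\<^esub>j\<in>{..<n}. (a i \<otimes>\<^bsub>W\<^esub> b j) \<otimes>\<^bsub>W\<^esub> P (cf (dlt (es!j)) l \<otimes>\<^bsub>A\<^esub> cst i l k))"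
      using a b k il dlt_cl by (intro finsum_cong_all) (simp add: W.m_ac)
    finally show "(a i \<otimes>\<^bsub>W\<^esub> (\<Oplus>\<^bsub>W\<^esub>j\<in>{..<n}. b j \<otimes>\<^bsub>W\<^esub> P (cf (dlt (es!j)) l))) \<otimes>\<^bsub>W\<^esub> P (cst i l k)
      = (\<Oplus>\<^bsub>W\<^esub>j\<in>{..<n}. (a i \<otimes>\<^bsub>W\<^esub> b j) \<otimes>\<^bsub>W\<^esub> P (cf (dlt (es!j)) l \<otimes>\<^bsub>A\<^esub> cst i l k))" .
  qed
  also have "\<dots> = (\<Oplus>\<^bsub>W\<^esub>i\<in>{..<n}. \<Oplus>\<^bsub>W\<^esub>j\<in>{..<n}. \<Oplus>\<^bsub>W\<^esub>l\<in>{..<n}.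
      (a i \<otimes>\<^bsub>W\<^esub> b j) \<otimes>\<^bsub>W\<^esub> P (cf (dlt (es!j)) l \<otimes>\<^bsub>A\<^esub> cst i l k))"
    using a b k dlt_cl by (intro finsum_cong_all W.finsum_swap) auto
  also have "\<dots> = bil a b (\<lambda>i j. \<Oplus>\<^bsub>A\<^esub>l\<in>{..<n}. cf (dlt (es!j)) l \<otimes>\<^bsub>A\<^esub> cst i l k)"
    using a b k dlt_cl by (subst bil_sum) auto
  finally show ?thesis .
qed

lemma T2:
  assumes a: "a \<in> {..<n} \<rightarrow>\<^sub>E carrier W" and b: "b \<in> {..<n} \<rightarrow>\<^sub>E carrier W" and k: "k < n"
  shows "mult T (Lv dlt a) b k = bil a b (\<lambda>i j. \<Oplus>\<^bsub>A\<^esub>l\<in>{..<n}. cf (dlt (es!i)) l \<otimes>\<^bsub>A\<^esub> cst l j k)"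
proof -
  have "mult T (Lv dlt a) b k = (\<Oplus>\<^bsub>W\<^esub>l\<in>{..<n}. \<Oplus>\<^bsub>W\<^esub>j\<in>{..<n}.
      ((\<Oplus>\<^bsub>W\<^esub>i\<in>{..<n}. a i \<otimes>\<^bsub>W\<^esub> P (cf (dlt (es!i)) l)) \<otimes>\<^bsub>W\<^esub> b j) \<otimes>\<^bsub>W\<^esub> P (cst l j k))"
    using k by (simp add: T_mult_k Lv_def cong: finsum_cong_simp)
  also have "\<dots> = (\<Oplus>\<^bsub>W\<^esub>l\<in>{..<n}. \<Oplus>\<^bsub>W\<^esub>j\<in>{..<n}. \<Oplus>\<^bsub>W\<^esub>i\<in>{..<n}.
      (a i \<otimes>\<^bsub>W\<^esub> b j) \<otimes>\<^bsub>W\<^esub> P (cf (dlt (es!i)) l \<otimes>\<^bsub>A\<^esub> cst l j k))"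
  proof (intro finsum_cong_all)
    fix l j assume il: "l \<in> {..<n}" "j \<in> {..<n}"
    have "((\<Oplus>\<^bsub>W\<^esub>i\<in>{..<n}. a i \<otimes>\<^bsub>W\<^esub> P (cf (dlt (es!i)) l)) \<otimes>\<^bsub>W\<^esub> b j) \<otimes>\<^bsub>W\<^esub> P (cst l j k)
      = (\<Oplus>\<^bsub>W\<^esub>i\<in>{..<n}. ((a i \<otimes>\<^bsub>W\<^esub> P (cf (dlt (es!i)) l)) \<otimes>\<^bsub>W\<^esub> b j) \<otimes>\<^bsub>W\<^esub> P (cst l j k))"
      using a b k il dlt_cl by (intro dist_helper2) auto
    also have "\<dots> = (\<Oplus>\<^bsub>W\<^esub>i\<in>{..<n}. (a i \<otimes>\<^bsub>W\<^esub> b j) \<otimes>\<^bsub>W\<^esub> P (cf (dlt (es!i)) l \<otimes>\<^bsub>A\<^esub> cst l j k))"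
      using a b k il dlt_cl by (intro finsum_cong_all) (simp add: W.m_ac)
    finally show "((\<Oplus>\<^bsub>W\<^esub>i\<in>{..<n}. a i \<otimes>\<^bsub>W\<^esub> P (cf (dlt (es!i)) l)) \<otimes>\<^bsub>W\<^esub> b j) \<otimes>\<^bsub>W\<^esub> P (cst l j k)
      = (\<Oplus>\<^bsub>W\<^esub>i\<in>{..<n}. (a i \<otimes>\<^bsub>W\<^esub> b j) \<otimes>\<^bsub>W\<^esub> P (cf (dlt (es!i)) l \<otimes>\<^bsub>A\<^esub> cst l j k))" .
  qed
  also have "\<dots> = (\<Oplus>\<^bsub>W\<^esub>l\<in>{..<n}. \<Oplus>\<^bsub>W\<^esub>i\<in>{..<n}. \<Oplus>\<^bsub>W\<^esub>j\<in>{..<n}.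
      (a i \<otimes>\<^bsub>W\<^esub> b j) \<otimes>\<^bsub>W\<^esub> P (cf (dlt (es!i)) l \<otimes>\<^bsub>A\<^esub> cst l j k))"
    using a b k dlt_cl by (intro finsum_cong_all W.finsum_swap) auto
  also have "\<dots> = (\<Oplus>\<^bsub>W\<^esub>i\<in>{..<n}. \<Oplus>\<^bsub>W\<^esub>l\<in>{..<n}. \<Oplus>\<^bsub>W\<^esub>j\<in>{..<n}.
      (a i \<otimes>\<^bsub>W\<^esub> b j) \<otimes>\<^bsub>W\<^esub> P (cf (dlt (es!i)) l \<otimes>\<^bsub>A\<^esub> cst l j k))"
    using a b k dlt_cl by (intro W.finsum_swap) (auto intro!: W.finsum_closed')
  also have "\<dots> = (\<Oplus>\<^bsub>W\<^esub>i\<in>{..<n}. \<Oplus>\<^bsub>W\<^esub>j\<in>{..<n}. \<Oplus>\<^bsub>W\<^esub>l\<in>{..<n}.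
      (a i \<otimes>\<^bsub>W\<^esub> b j) \<otimes>\<^bsub>W\<^esub> P (cf (dlt (es!i)) l \<otimes>\<^bsub>A\<^esub> cst l j k))"
    using a b k dlt_cl by (intro finsum_cong_all W.finsum_swap) auto
  also have "\<dots> = bil a b (\<lambda>i j. \<Oplus>\<^bsub>A\<^esub>l\<in>{..<n}. cf (dlt (es!i)) l \<otimes>\<^bsub>A\<^esub> cst l j k)"
    using a b k dlt_cl by (subst bil_sum) auto
  finally show ?thesis .
qed

lemma T4:
  assumes a: "a \<in> {..<n} \<rightarrow>\<^sub>E carrier W" and b: "b \<in> {..<n} \<rightarrow>\<^sub>E carrier W" and k: "k < n"
  shows "Lv dlt (mult T a b) k = bil a b (\<lambda>i j. \<Oplus>\<^bsub>A\<^esub>m\<in>{..<n}. cst i j m \<otimes>\<^bsub>A\<^esub> cf (dlt (es!m)) k)"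
proof -
  have "Lv dlt (mult T a b) k = (\<Oplus>\<^bsub>W\<^esub>m\<in>{..<n}.
      (\<Oplus>\<^bsub>W\<^esub>i\<in>{..<n}. \<Oplus>\<^bsub>W\<^esub>j\<in>{..<n}. (a i \<otimes>\<^bsub>W\<^esub> b j) \<otimes>\<^bsub>W\<^esub> P (cst i j m)) \<otimes>\<^bsub>W\<^esub> P (cf (dlt (es!m)) k))"
    using k by (simp add: T_mult_k Lv_def cong: finsum_cong_simp)
  also have "\<dots> = (\<Oplus>\<^bsub>W\<^esub>m\<in>{..<n}. \<Oplus>\<^bsub>W\<^esub>i\<in>{..<n}. \<Oplus>\<^bsub>W\<^esub>j\<in>{..<n}.
      (a i \<otimes>\<^bsub>W\<^esub> b j) \<otimes>\<^bsub>W\<^esub> P (cst i j m \<otimes>\<^bsub>A\<^esub> cf (dlt (es!m)) k))"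
  proof (intro finsum_cong_all)
    fix m assume m: "m \<in> {..<n}"
    have "(\<Oplus>\<^bsub>W\<^esub>i\<in>{..<n}. \<Oplus>\<^bsub>W\<^esub>j\<in>{..<n}. (a i \<otimes>\<^bsub>W\<^esub> b j) \<otimes>\<^bsub>W\<^esub> P (cst i j m)) \<otimes>\<^bsub>W\<^esub> P (cf (dlt (es!m)) k)
      = (\<Oplus>\<^bsub>W\<^esub>i\<in>{..<n}. (\<Oplus>\<^bsub>W\<^esub>j\<in>{..<n}. (a i \<otimes>\<^bsub>W\<^esub> b j) \<otimes>\<^bsub>W\<^esub> P (cst i j m)) \<otimes>\<^bsub>W\<^esub> P (cf (dlt (es!m)) k))"
      using a b k m dlt_cl by (intro W.finsum_ldistr') (auto intro!: W.finsum_closed')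
    also have "\<dots> = (\<Oplus>\<^bsub>W\<^esub>i\<in>{..<n}. \<Oplus>\<^bsub>W\<^esub>j\<in>{..<n}. ((a i \<otimes>\<^bsub>W\<^esub> b j) \<otimes>\<^bsub>W\<^esub> P (cst i j m)) \<otimes>\<^bsub>W\<^esub> P (cf (dlt (es!m)) k))"
      using a b k m dlt_cl by (intro finsum_cong_all W.finsum_ldistr') auto
    also have "\<dots> = (\<Oplus>\<^bsub>W\<^esub>i\<in>{..<n}. \<Oplus>\<^bsub>W\<^esub>j\<in>{..<n}.
      (a i \<otimes>\<^bsub>W\<^esub> b j) \<otimes>\<^bsub>W\<^esub> P (cst i j m \<otimes>\<^bsub>A\<^esub> cf (dlt (es!m)) k))"
      using a b k m dlt_cl by (intro finsum_cong_all) (simp add: W.m_ac)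
    finally show "(\<Oplus>\<^bsub>W\<^esub>i\<in>{..<n}. \<Oplus>\<^bsub>W\<^esub>j\<in>{..<n}. (a i \<otimes>\<^bsub>W\<^esub> b j) \<otimes>\<^bsub>W\<^esub> P (cst i j m)) \<otimes>\<^bsub>W\<^esub> P (cf (dlt (es!m)) k)
      = (\<Oplus>\<^bsub>W\<^esub>i\<in>{..<n}. \<Oplus>\<^bsub>W\<^esub>j\<in>{..<n}.
      (a i \<otimes>\<^bsub>W\<^esub> b j) \<otimes>\<^bsub>W\<^esub> P (cst i j m \<otimes>\<^bsub>A\<^esub> cf (dlt (es!m)) k))" .
  qed
  also have "\<dots> = (\<Oplus>\<^bsub>W\<^esub>i\<in>{..<n}. \<Oplus>\<^bsub>W\<^esub>m\<in>{..<n}. \<Oplus>\<^bsub>W\<^esub>j\<in>{..<n}.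
      (a i \<otimes>\<^bsub>W\<^esub> b j) \<otimes>\<^bsub>W\<^esub> P (cst i j m \<otimes>\<^bsub>A\<^esub> cf (dlt (es!m)) k))"
    using a b k dlt_cl by (intro W.finsum_swap) (auto intro!: W.finsum_closed')
  also have "\<dots> = (\<Oplus>\<^bsub>W\<^esub>i\<in>{..<n}. \<Oplus>\<^bsub>W\<^esub>j\<in>{..<n}. \<Oplus>\<^bsub>W\<^esub>m\<in>{..<n}.
      (a i \<otimes>\<^bsub>W\<^esub> b j) \<otimes>\<^bsub>W\<^esub> P (cst i j m \<otimes>\<^bsub>A\<^esub> cf (dlt (es!m)) k))"
    using a b k dlt_cl by (intro finsum_cong_all W.finsum_swap) auto
  also have "\<dots> = bil a b (\<lambda>i j. \<Oplus>\<^bsub>A\<^esub>m\<in>{..<n}. cst i j m \<otimes>\<^bsub>A\<^esub> cf (dlt (es!m)) k)"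
    using a b k dlt_cl by (subst bil_sum) auto
  finally show ?thesis .
qed

end

end



context tsetup
begin

context
  fixes d delta
  assumes d: "derivation A d" and delta: "derivation B delta"
    and compat: "\<And>a. a \<in> carrier A \<Longrightarrow> delta (phi a) = phi (d a)"
begin

lemma d_cl' [simp]: "a \<in> carrier A \<Longrightarrow> d a \<in> carrier A"
  using d unfolding derivation_def by auto

lemma delta_cl' [simp]: "b \<in> carrier B \<Longrightarrow> delta b \<in> carrier B"
  using delta unfolding derivation_def by auto

lemma KW:
  assumes a: "a \<in> {..<n} \<rightarrow>\<^sub>E carrier W" and b: "b \<in> {..<n} \<rightarrow>\<^sub>E carrier W" and k: "k < n"
  shows "mult T a (Lv delta b) k \<oplus>\<^bsub>W\<^esub> mult T (Lv delta a) b k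
     = bil a b (\<lambda>i j. d (cst i j k)) \<oplus>\<^bsub>W\<^esub> Lv delta (mult T a b) k"
proof -
  have "mult T a (Lv delta b) k \<oplus>\<^bsub>W\<^esub> mult T (Lv delta a) b k
    = bil a b (\<lambda>i j. \<Oplus>\<^bsub>A\<^esub>l\<in>{..<n}. cf (delta (es!j)) l \<otimes>\<^bsub>A\<^esub> cst i l k)
      \<oplus>\<^bsub>W\<^esub> bil a b (\<lambda>i j. \<Oplus>\<^bsub>A\<^esub>l\<in>{..<n}. cf (delta (es!i)) l \<otimes>\<^bsub>A\<^esub> cst l j k)"
    using a b k by (simp add: T1 T2)
  also have "\<dots> = bil a b (\<lambda>i j. (\<Oplus>\<^bsub>A\<^esub>l\<in>{..<n}. cf (delta (es!j)) l \<otimes>\<^bsub>A\<^esub> cst i l k)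
      \<oplus>\<^bsub>A\<^esub> (\<Oplus>\<^bsub>A\<^esub>l\<in>{..<n}. cf (delta (es!i)) l \<otimes>\<^bsub>A\<^esub> cst l j k))"
    using a b k by (intro bil_add) (auto intro!: A.finsum_closed')
  also have "\<dots> = bil a b (\<lambda>i j. d (cst i j k) \<oplus>\<^bsub>A\<^esub> (\<Oplus>\<^bsub>A\<^esub>m\<in>{..<n}. cst i j m \<otimes>\<^bsub>A\<^esub> cf (delta (es!m)) k))"
    using k by (intro bil_cong key_A[OF d delta compat])
  also have "\<dots> = bil a b (\<lambda>i j. d (cst i j k)) \<oplus>\<^bsub>W\<^esub> bil a b (\<lambda>i j. \<Oplus>\<^bsub>A\<^esub>m\<in>{..<n}. cst i j m \<otimes>\<^bsub>A\<^esub> cf (delta (es!m)) k)"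
    using a b k by (intro bil_add[symmetric]) (auto intro!: A.finsum_closed')
  also have "\<dots> = bil a b (\<lambda>i j. d (cst i j k)) \<oplus>\<^bsub>W\<^esub> Lv delta (mult T a b) k"
    using a b k by (simp add: T4)
  finally show ?thesis .
qed

end

context
  fixes d delta dW
  assumes d: "derivation A d" and delta: "derivation B delta"
    and compat: "\<And>a. a \<in> carrier A \<Longrightarrow> delta (phi a) = phi (d a)"
    and dW: "derivation W dW"
    and compatW: "\<And>a. a \<in> carrier A \<Longrightarrow> dW (P a) = P (d a)"
begin

lemma d_cl [simp]: "a \<in> carrier A \<Longrightarrow> d a \<in> carrier A"
  using d unfolding derivation_def by auto
lemma delta_cl [simp]: "b \<in> carrier B \<Longrightarrow> delta b \<in> carrier B"
  using delta unfolding derivation_def by auto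
lemma dW_cl [simp]: "x \<in> carrier W \<Longrightarrow> dW x \<in> carrier W"
  using dW unfolding derivation_def by auto
lemma dW_add: "x \<in> carrier W \<Longrightarrow> y \<in> carrier W \<Longrightarrow> dW (x \<oplus>\<^bsub>W\<^esub> y) = dW x \<oplus>\<^bsub>W\<^esub> dW y"
  using dW unfolding derivation_def by auto
lemma dW_mult: "x \<in> carrier W \<Longrightarrow> y \<in> carrier W \<Longrightarrow> dW (x \<otimes>\<^bsub>W\<^esub> y) = dW x \<otimes>\<^bsub>W\<^esub> y \<oplus>\<^bsub>W\<^esub> x \<otimes>\<^bsub>W\<^esub> dW y"
  using dW unfolding derivation_def by auto

lemma Dv_mult:
  assumes a: "a \<in> {..<n} \<rightarrow>\<^sub>E carrier W" and b: "b \<in> {..<n} \<rightarrow>\<^sub>E carrier W" and k: "k < n"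
  shows "Dv dW (mult T a b) k = mult T (Dv dW a) b k \<oplus>\<^bsub>W\<^esub> mult T a (Dv dW b) k
     \<oplus>\<^bsub>W\<^esub> bil a b (\<lambda>i j. d (cst i j k))"
proof -
  have "Dv dW (mult T a b) k = dW (\<Oplus>\<^bsub>W\<^esub>i\<in>{..<n}. \<Oplus>\<^bsub>W\<^esub>j\<in>{..<n}. (a i \<otimes>\<^bsub>W\<^esub> b j) \<otimes>\<^bsub>W\<^esub> P (cst i j k))"
    using k by (simp add: Dv_k T_mult_k)
  also have "\<dots> = (\<Oplus>\<^bsub>W\<^esub>i\<in>{..<n}. dW (\<Oplus>\<^bsub>W\<^esub>j\<in>{..<n}. (a i \<otimes>\<^bsub>W\<^esub> b j) \<otimes>\<^bsub>W\<^esub> P (cst i j k)))"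
    using a b k by (intro W.deriv_finsum dW) (auto intro!: W.finsum_closed')
  also have "\<dots> = (\<Oplus>\<^bsub>W\<^esub>i\<in>{..<n}. \<Oplus>\<^bsub>W\<^esub>j\<in>{..<n}. dW ((a i \<otimes>\<^bsub>W\<^esub> b j) \<otimes>\<^bsub>W\<^esub> P (cst i j k)))"
    using a b k by (intro finsum_cong_all W.deriv_finsum dW) auto
  also have "\<dots> = (\<Oplus>\<^bsub>W\<^esub>i\<in>{..<n}. \<Oplus>\<^bsub>W\<^esub>j\<in>{..<n}.
       ((dW (a i) \<otimes>\<^bsub>W\<^esub> b j) \<otimes>\<^bsub>W\<^esub> P (cst i j k) \<oplus>\<^bsub>W\<^esub> (a i \<otimes>\<^bsub>W\<^esub> dW (b j)) \<otimes>\<^bsub>W\<^esub> P (cst i j k))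
       \<oplus>\<^bsub>W\<^esub> (a i \<otimes>\<^bsub>W\<^esub> b j) \<otimes>\<^bsub>W\<^esub> P (d (cst i j k)))"
    using a b k by (intro finsum_cong_all) (simp add: dW_mult compatW W.l_distr)
  also have "\<dots> = (\<Oplus>\<^bsub>W\<^esub>i\<in>{..<n}. \<Oplus>\<^bsub>W\<^esub>j\<in>{..<n}.
       ((dW (a i) \<otimes>\<^bsub>W\<^esub> b j) \<otimes>\<^bsub>W\<^esub> P (cst i j k) \<oplus>\<^bsub>W\<^esub> (a i \<otimes>\<^bsub>W\<^esub> dW (b j)) \<otimes>\<^bsub>W\<^esub> P (cst i j k)))
       \<oplus>\<^bsub>W\<^esub> (\<Oplus>\<^bsub>W\<^esub>i\<in>{..<n}. \<Oplus>\<^bsub>W\<^esub>j\<in>{..<n}. (a i \<otimes>\<^bsub>W\<^esub> b j) \<otimes>\<^bsub>W\<^esub> P (d (cst i j k)))"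
    using a b k by (intro sum2_add) auto
  also have "(\<Oplus>\<^bsub>W\<^esub>i\<in>{..<n}. \<Oplus>\<^bsub>W\<^esub>j\<in>{..<n}.
       ((dW (a i) \<otimes>\<^bsub>W\<^esub> b j) \<otimes>\<^bsub>W\<^esub> P (cst i j k) \<oplus>\<^bsub>W\<^esub> (a i \<otimes>\<^bsub>W\<^esub> dW (b j)) \<otimes>\<^bsub>W\<^esub> P (cst i j k)))
     = (\<Oplus>\<^bsub>W\<^esub>i\<in>{..<n}. \<Oplus>\<^bsub>W\<^esub>j\<in>{..<n}. (dW (a i) \<otimes>\<^bsub>W\<^esub> b j) \<otimes>\<^bsub>W\<^esub> P (cst i j k))
       \<oplus>\<^bsub>W\<^esub> (\<Oplus>\<^bsub>W\<^esub>i\<in>{..<n}. \<Oplus>\<^bsub>W\<^esub>j\<in>{..<n}. (a i \<otimes>\<^bsub>W\<^esub> dW (b j)) \<otimes>\<^bsub>W\<^esub> P (cst i j k))"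
    using a b k by (intro sum2_add) auto
  also have "(\<Oplus>\<^bsub>W\<^esub>i\<in>{..<n}. \<Oplus>\<^bsub>W\<^esub>j\<in>{..<n}. (dW (a i) \<otimes>\<^bsub>W\<^esub> b j) \<otimes>\<^bsub>W\<^esub> P (cst i j k))
     = mult T (Dv dW a) b k"
    using k by (simp add: T_mult_k Dv_k cong: finsum_cong_simp)
  also have "(\<Oplus>\<^bsub>W\<^esub>i\<in>{..<n}. \<Oplus>\<^bsub>W\<^esub>j\<in>{..<n}. (a i \<otimes>\<^bsub>W\<^esub> dW (b j)) \<otimes>\<^bsub>W\<^esub> P (cst i j k))
     = mult T a (Dv dW b) k"
    using k by (simp add: T_mult_k Dv_k cong: finsum_cong_simp)
  finally show ?thesis by (simp add: bil_def)
qed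

lemma Dv_closed [simp]: "a \<in> {..<n} \<rightarrow>\<^sub>E carrier W \<Longrightarrow> Dv dW a \<in> {..<n} \<rightarrow>\<^sub>E carrier W"
  by (auto simp: Dv_def)

lemma E0_on: "a \<in> {..<n} \<rightarrow>\<^sub>E carrier W \<Longrightarrow> E0 dW delta a = add T (Dv dW a) (Lv delta a)"
  by (simp add: E0_def T_carrier)

lemma E0_closed [simp]: "a \<in> {..<n} \<rightarrow>\<^sub>E carrier W \<Longrightarrow> E0 dW delta a \<in> {..<n} \<rightarrow>\<^sub>E carrier W"
  by (simp add: E0_on)

lemma E0_k: "a \<in> {..<n} \<rightarrow>\<^sub>E carrier W \<Longrightarrow> k < n \<Longrightarrow>
   E0 dW delta a k = dW (a k) \<oplus>\<^bsub>W\<^esub> (\<Oplus>\<^bsub>W\<^esub>j\<in>{..<n}. a j \<otimes>\<^bsub>W\<^esub> P (cf (delta (es!j)) k))"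
  by (simp add: E0_on T_add_k Dv_k Lv_k)

lemma E0_add:
  assumes a: "a \<in> {..<n} \<rightarrow>\<^sub>E carrier W" and b: "b \<in> {..<n} \<rightarrow>\<^sub>E carrier W"
  shows "E0 dW delta (add T a b) = add T (E0 dW delta a) (E0 dW delta b)"
proof (rule vec_eqI)
  fix k assume k: "k < n"
  have "(\<Oplus>\<^bsub>W\<^esub>j\<in>{..<n}. add T a b j \<otimes>\<^bsub>W\<^esub> P (cf (delta (es!j)) k))
     = (\<Oplus>\<^bsub>W\<^esub>j\<in>{..<n}. a j \<otimes>\<^bsub>W\<^esub> P (cf (delta (es!j)) k) \<oplus>\<^bsub>W\<^esub> b j \<otimes>\<^bsub>W\<^esub> P (cf (delta (es!j)) k))"
    using a b k by (intro finsum_cong_all) (simp add: T_add_k W.l_distr)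
  also have "\<dots> = (\<Oplus>\<^bsub>W\<^esub>j\<in>{..<n}. a j \<otimes>\<^bsub>W\<^esub> P (cf (delta (es!j)) k)) \<oplus>\<^bsub>W\<^esub>
      (\<Oplus>\<^bsub>W\<^esub>j\<in>{..<n}. b j \<otimes>\<^bsub>W\<^esub> P (cf (delta (es!j)) k))"
    using a b k by (intro W.finsum_addf') auto
  finally have L: "(\<Oplus>\<^bsub>W\<^esub>j\<in>{..<n}. add T a b j \<otimes>\<^bsub>W\<^esub> P (cf (delta (es!j)) k)) =
      (\<Oplus>\<^bsub>W\<^esub>j\<in>{..<n}. a j \<otimes>\<^bsub>W\<^esub> P (cf (delta (es!j)) k)) \<oplus>\<^bsub>W\<^esub>
      (\<Oplus>\<^bsub>W\<^esub>j\<in>{..<n}. b j \<otimes>\<^bsub>W\<^esub> P (cf (delta (es!j)) k))" .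
  show "E0 dW delta (add T a b) k = add T (E0 dW delta a) (E0 dW delta b) k"
    using a b k L
    by (simp add: E0_k T_add_k dW_add W.a_ac W.finsum_closed')
qed (use assms in auto)

lemma E0_mult:
  assumes a: "a \<in> {..<n} \<rightarrow>\<^sub>E carrier W" and b: "b \<in> {..<n} \<rightarrow>\<^sub>E carrier W"
  shows "E0 dW delta (mult T a b) = add T (mult T (E0 dW delta a) b) (mult T a (E0 dW delta b))"
proof (rule vec_eqI)
  fix k assume k: "k < n"
  have dl: "\<And>b. b \<in> carrier B \<Longrightarrow> delta b \<in> carrier B" by simp
  define X1 where "X1 = mult T (Dv dW a) b k"
  define X2 where "X2 = mult T a (Dv dW b) k"
  define Bl where "Bl = bil a b (\<lambda>i j. d (cst i j k))"
  define L4 where "L4 = Lv delta (mult T a b) k"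
  define Y1 where "Y1 = mult T a (Lv delta b) k"
  define Y2 where "Y2 = mult T (Lv delta a) b k"
  have cl: "X1 \<in> carrier W" "X2 \<in> carrier W" "Bl \<in> carrier W" "L4 \<in> carrier W" "Y1 \<in> carrier W" "Y2 \<in> carrier W"
    unfolding X1_def X2_def Bl_def L4_def Y1_def Y2_def using a b k dl by auto
  have KW': "Y1 \<oplus>\<^bsub>W\<^esub> Y2 = Bl \<oplus>\<^bsub>W\<^esub> L4"
    unfolding Y1_def Y2_def Bl_def L4_def using KW[OF d delta compat a b k] by blast
  have "E0 dW delta (mult T a b) k = Dv dW (mult T a b) k \<oplus>\<^bsub>W\<^esub> L4"
    using a b k by (simp add: E0_on T_add_k L4_def)
  also have "\<dots> = ((X1 \<oplus>\<^bsub>W\<^esub> X2) \<oplus>\<^bsub>W\<^esub> Bl) \<oplus>\<^bsub>W\<^esub> L4"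
    using a b k by (simp add: Dv_mult X1_def X2_def Bl_def)
  also have "\<dots> = (X1 \<oplus>\<^bsub>W\<^esub> X2) \<oplus>\<^bsub>W\<^esub> (Y1 \<oplus>\<^bsub>W\<^esub> Y2)"
    using cl KW' by (simp add: W.a_assoc)
  also have "\<dots> = (X1 \<oplus>\<^bsub>W\<^esub> Y2) \<oplus>\<^bsub>W\<^esub> (X2 \<oplus>\<^bsub>W\<^esub> Y1)"
    using cl by (simp add: W.a_ac)
  also have "\<dots> = mult T (E0 dW delta a) b k \<oplus>\<^bsub>W\<^esub> mult T a (E0 dW delta b) k"
    using a b k dl by (simp add: E0_on T_l_distr T_r_distr T_add_k X1_def X2_def Y1_def Y2_def)
  finally show "E0 dW delta (mult T a b) k = add T (mult T (E0 dW delta a) b) (mult T a (E0 dW delta b)) k"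
    using k by (simp add: T_add_k)
qed (use assms in auto)

lemma E0_derivation: "derivation T (E0 dW delta)"
  unfolding derivation_def T_carrier using E0_add E0_mult by auto

lemma E0_ext: "E0 dW delta \<in> extensional (carrier T)"
  by (simp add: E0_def extensional_def)

lemma E0_sc:
  assumes x: "x \<in> carrier W" and b: "b \<in> carrier B"
  shows "E0 dW delta (sc x b) = add T (sc (dW x) b) (sc x (delta b))"
proof (rule vec_eqI)
  fix k assume k: "k < n"
  have "(\<Oplus>\<^bsub>W\<^esub>j\<in>{..<n}. sc x b j \<otimes>\<^bsub>W\<^esub> P (cf (delta (es!j)) k))
     = (\<Oplus>\<^bsub>W\<^esub>j\<in>{..<n}. x \<otimes>\<^bsub>W\<^esub> P (cf b j \<otimes>\<^bsub>A\<^esub> cf (delta (es!j)) k))"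
    using x b k by (intro finsum_cong_all) (simp add: sc_k W.m_assoc)
  also have "\<dots> = x \<otimes>\<^bsub>W\<^esub> (\<Oplus>\<^bsub>W\<^esub>j\<in>{..<n}. P (cf b j \<otimes>\<^bsub>A\<^esub> cf (delta (es!j)) k))"
    using x b k by (intro W.finsum_rdistr'[symmetric]) auto
  also have "\<dots> = x \<otimes>\<^bsub>W\<^esub> P (\<Oplus>\<^bsub>A\<^esub>j\<in>{..<n}. cf b j \<otimes>\<^bsub>A\<^esub> cf (delta (es!j)) k)"
    using x b k by (subst pw.hom_finsum) (auto simp: comp_def)
  finally have L: "(\<Oplus>\<^bsub>W\<^esub>j\<in>{..<n}. sc x b j \<otimes>\<^bsub>W\<^esub> P (cf (delta (es!j)) k))
     = x \<otimes>\<^bsub>W\<^esub> P (\<Oplus>\<^bsub>A\<^esub>j\<in>{..<n}. cf b j \<otimes>\<^bsub>A\<^esub> cf (delta (es!j)) k)" .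
  have cfd: "cf (delta b) k = d (cf b k) \<oplus>\<^bsub>A\<^esub> (\<Oplus>\<^bsub>A\<^esub>j\<in>{..<n}. cf b j \<otimes>\<^bsub>A\<^esub> cf (delta (es!j)) k)"
    using cf_deriv[OF d delta compat b k] .
  have S: "(\<Oplus>\<^bsub>A\<^esub>j\<in>{..<n}. cf b j \<otimes>\<^bsub>A\<^esub> cf (delta (es!j)) k) \<in> carrier A"
    using b k by (auto intro!: A.finsum_closed')
  show "E0 dW delta (sc x b) k = add T (sc (dW x) b) (sc x (delta b)) k"
    using x b k S by (simp add: E0_k sc_k T_add_k L cfd dW_mult compatW W.r_distr W.a_assoc)
qed (use assms in auto)

lemma E0_inl:
  "x \<in> carrier W \<Longrightarrow> E0 dW delta (tensor_inl A B phi es W P x) = tensor_inl A B phi es W P (dW x)"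
  by (simp add: inl_sc E0_sc B.deriv_one[OF delta] sc_zero_right T_add_zero)

lemma E0_inr:
  "b \<in> carrier B \<Longrightarrow> E0 dW delta (tensor_inr A B phi es W P b) = tensor_inr A B phi es W P (delta b)"
  by (simp add: inr_sc' E0_sc W.deriv_one[OF dW] sc_zero_left T_zero_add)

lemma E0_diff_inl: "diff_hom W dW T (E0 dW delta) (tensor_inl A B phi es W P)"
  unfolding diff_hom_def using inl_hom E0_inl by auto

lemma E0_diff_inr: "diff_hom B delta T (E0 dW delta) (tensor_inr A B phi es W P)"
  unfolding diff_hom_def using inr_hom E0_inr by auto

lemma deriv_T_zero:
  assumes E: "derivation T E"
  shows "E (zero T) = zero T"
proof -
  have cl: "E (zero T) \<in> {..<n} \<rightarrow>\<^sub>E carrier W"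
  proof -
    have "zero T \<in> {..<n} \<rightarrow>\<^sub>E carrier W" by simp
    then show ?thesis using E unfolding derivation_def T_carrier by blast
  qed
  have "E (zero T) = E (add T (zero T) (zero T))" by (simp add: T_add_zero)
  also have "\<dots> = add T (E (zero T)) (E (zero T))"
    using E unfolding derivation_def T_carrier by auto
  finally have eq: "E (zero T) = add T (E (zero T)) (E (zero T))" .
  show ?thesis
  proof (rule vec_eqI[OF cl])
    fix k assume k: "k < n"
    have "E (zero T) k = E (zero T) k \<oplus>\<^bsub>W\<^esub> E (zero T) k"
      using eq k by (metis T_add_k)
    then show "E (zero T) k = zero T k"
      using cl k by (simp add: T_zero)
  qed simp
qed

lemma sc_basis_prod:
  assumes x: "x \<in> carrier W" and m: "m < n"
  shows "sc x (es!m) = mult T (tensor_inl A B phi es W P x) (tensor_inr A B phi es W P (es!m))"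
  using assms by (simp add: inl_sc inr_sc' sc_mult)

lemma E_basis:
  assumes E: "derivation T E" and El: "diff_hom W dW T E (tensor_inl A B phi es W P)"
    and Er: "diff_hom B delta T E (tensor_inr A B phi es W P)"
    and x: "x \<in> carrier W" and m: "m < n"
  shows "E (sc x (es!m)) = add T (mult T (tensor_inl A B phi es W P (dW x)) (tensor_inr A B phi es W P (es!m)))
            (mult T (tensor_inl A B phi es W P x) (tensor_inr A B phi es W P (delta (es!m))))"
proof -
  have c1: "tensor_inl A B phi es W P x \<in> carrier T" using x inl_hom by (rule_tac ring_hom_closed) auto
  have c2: "tensor_inr A B phi es W P (es!m) \<in> carrier T" using m inr_hom by (rule_tac ring_hom_closed) auto
  have "E (sc x (es!m)) = E (mult T (tensor_inl A B phi es W P x) (tensor_inr A B phi es W P (es!m)))"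
    using x m by (simp add: sc_basis_prod)
  also have "\<dots> = add T (mult T (E (tensor_inl A B phi es W P x)) (tensor_inr A B phi es W P (es!m)))
            (mult T (tensor_inl A B phi es W P x) (E (tensor_inr A B phi es W P (es!m))))"
    using E c1 c2 unfolding derivation_def by blast
  also have "\<dots> = add T (mult T (tensor_inl A B phi es W P (dW x)) (tensor_inr A B phi es W P (es!m)))
            (mult T (tensor_inl A B phi es W P x) (tensor_inr A B phi es W P (delta (es!m))))"
    using El Er x m unfolding diff_hom_def by auto
  finally show ?thesis .
qed

lemma E_unique:
  assumes E: "derivation T E" and El: "diff_hom W dW T E (tensor_inl A B phi es W P)"
    and Er: "diff_hom B delta T E (tensor_inr A B phi es W P)"
    and v: "v \<in> {..<n} \<rightarrow>\<^sub>E carrier W"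
  shows "E v = E0 dW delta v"
proof -
  define s where "s m = (\<lambda>k\<in>{..<n}. if k < m then v k else \<zero>\<^bsub>W\<^esub>)" for m
  have s_cl: "s m \<in> {..<n} \<rightarrow>\<^sub>E carrier W" for m using v by (auto simp: s_def)
  have "m \<le> n \<Longrightarrow> E (s m) = E0 dW delta (s m)" for m
  proof (induction m)
    case 0
    have "s 0 = zero T" by (simp add: s_def T_zero)
    then show ?case using deriv_T_zero[OF E] deriv_T_zero[OF E0_derivation] by simp
  next
    case (Suc m)
    then have m: "m < n" by simp
    have sS: "s (Suc m) = add T (s m) (sc (v m) (es!m))"
      using v m by (intro vec_eqI) (auto simp: s_def T_add_k sc_k cf_basis s_cl less_Suc_eq)
    have scl: "sc (v m) (es!m) \<in> {..<n} \<rightarrow>\<^sub>E carrier W" using v m by simp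
    have "E (s (Suc m)) = add T (E (s m)) (E (sc (v m) (es!m)))"
      using E sS s_cl scl unfolding derivation_def T_carrier by auto
    moreover have "E0 dW delta (s (Suc m)) = add T (E0 dW delta (s m)) (E0 dW delta (sc (v m) (es!m)))"
      using sS s_cl scl E0_add by auto
    moreover have "E (sc (v m) (es!m)) = E0 dW delta (sc (v m) (es!m))"
      using E_basis[OF E El Er, of "v m" m] E_basis[OF E0_derivation E0_diff_inl E0_diff_inr, of "v m" m] v m
      by simp
    ultimately show ?case using Suc by simp
  qed
  moreover have "s n = v" using v by (intro vec_eqI) (auto simp: s_def s_cl)
  ultimately show ?thesis by auto
qed

lemma tensor_deriv_eq: "tensor_deriv A B phi es W P dW delta = E0 dW delta"
  unfolding tensor_deriv_def
proof (rule the_equality)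
  show "derivation T (E0 dW delta) \<and> E0 dW delta \<in> extensional (carrier T) \<and>
    diff_hom W dW T (E0 dW delta) (tensor_inl A B phi es W P) \<and>
    diff_hom B delta T (E0 dW delta) (tensor_inr A B phi es W P)"
    using E0_derivation E0_ext E0_diff_inl E0_diff_inr by blast
next
  fix E assume H: "derivation T E \<and> E \<in> extensional (carrier T) \<and>
    diff_hom W dW T E (tensor_inl A B phi es W P) \<and> diff_hom B delta T E (tensor_inr A B phi es W P)"
  show "E = E0 dW delta"
  proof
    fix v show "E v = E0 dW delta v"
    proof (cases "v \<in> carrier T")
      case True then show ?thesis using H E_unique T_carrier by auto
    next
      case False then show ?thesis using H E0_ext by (auto simp: extensional_def)
    qed
  qed
qed

end

end



definition dual :: "('w, 'm) ring_scheme \<Rightarrow> ('w \<times> 'w) ring" where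
  "dual W = \<lparr> carrier = carrier W \<times> carrier W,
     mult = (\<lambda>p q. (fst p \<otimes>\<^bsub>W\<^esub> fst q, fst p \<otimes>\<^bsub>W\<^esub> snd q \<oplus>\<^bsub>W\<^esub> snd p \<otimes>\<^bsub>W\<^esub> fst q)),
     one = (\<one>\<^bsub>W\<^esub>, \<zero>\<^bsub>W\<^esub>),
     zero = (\<zero>\<^bsub>W\<^esub>, \<zero>\<^bsub>W\<^esub>),
     add = (\<lambda>p q. (fst p \<oplus>\<^bsub>W\<^esub> fst q, snd p \<oplus>\<^bsub>W\<^esub> snd q)) \<rparr>"

lemma dual_simps:
  "carrier (dual W) = carrier W \<times> carrier W"
  "mult (dual W) p q = (fst p \<otimes>\<^bsub>W\<^esub> fst q, fst p \<otimes>\<^bsub>W\<^esub> snd q \<oplus>\<^bsub>W\<^esub> snd p \<otimes>\<^bsub>W\<^esub> fst q)"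
  "one (dual W) = (\<one>\<^bsub>W\<^esub>, \<zero>\<^bsub>W\<^esub>)"
  "zero (dual W) = (\<zero>\<^bsub>W\<^esub>, \<zero>\<^bsub>W\<^esub>)"
  "add (dual W) p q = (fst p \<oplus>\<^bsub>W\<^esub> fst q, snd p \<oplus>\<^bsub>W\<^esub> snd q)"
  by (simp_all add: dual_def)

lemma (in cring) dual_cring: "cring (dual R)"
proof (rule cringI)
  show "abelian_group (dual R)"
  proof (rule abelian_groupI)
    fix x assume x: "x \<in> carrier (dual R)"
    show "\<exists>y\<in>carrier (dual R). y \<oplus>\<^bsub>dual R\<^esub> x = \<zero>\<^bsub>dual R\<^esub>"
      using x by (intro bexI[of _ "(\<ominus> fst x, \<ominus> snd x)"]) (auto simp: dual_simps l_neg)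
  qed (auto simp: dual_simps a_ac)
  show "comm_monoid (dual R)"
    by (rule comm_monoidI) (auto simp: dual_simps m_ac l_distr r_distr a_ac)
  fix x y z assume "x \<in> carrier (dual R)" "y \<in> carrier (dual R)" "z \<in> carrier (dual R)"
  then show "(x \<oplus>\<^bsub>dual R\<^esub> y) \<otimes>\<^bsub>dual R\<^esub> z = x \<otimes>\<^bsub>dual R\<^esub> z \<oplus>\<^bsub>dual R\<^esub> y \<otimes>\<^bsub>dual R\<^esub> z"
    by (auto simp: dual_simps l_distr r_distr a_ac)
qed

lemma (in cring) dual_finsum:
  assumes "finite S" "\<And>i. i \<in> S \<Longrightarrow> F i \<in> carrier R \<times> carrier R"
  shows "finsum (dual R) F S = (\<Oplus>i\<in>S. fst (F i), \<Oplus>i\<in>S. snd (F i))"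
  using assms
proof (induction S rule: finite_induct)
  case empty
  interpret DR: cring "dual R" by (rule dual_cring)
  show ?case by (simp add: dual_simps)
next
  case (insert x S)
  interpret DR: cring "dual R" by (rule dual_cring)
  have "finsum (dual R) F (insert x S) = F x \<oplus>\<^bsub>dual R\<^esub> finsum (dual R) F S"
    using insert by (intro DR.finsum_insert) (auto simp: dual_simps)
  also have "\<dots> = (\<Oplus>i\<in>insert x S. fst (F i), \<Oplus>i\<in>insert x S. snd (F i))"
    using insert by (simp add: dual_simps finsum_insert mem_Times_iff)
  finally show ?case .
qed


context cring
begin
lemma diff1: "x \<in> carrier R \<Longrightarrow> y \<in> carrier R \<Longrightarrow> (x \<oplus> y) \<ominus> y = x"
  by (simp add: a_minus_def a_assoc r_neg)
lemma diff2: "x \<in> carrier R \<Longrightarrow> y \<in> carrier R \<Longrightarrow> (x \<ominus> y) \<oplus> y = x"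
  by (simp add: a_minus_def a_assoc l_neg)
lemma diff3: "p \<in> carrier R \<Longrightarrow> q \<in> carrier R \<Longrightarrow> r \<in> carrier R \<Longrightarrow> s \<in> carrier R \<Longrightarrow>
   (p \<oplus> q) \<ominus> (r \<oplus> s) = (p \<ominus> r) \<oplus> (q \<ominus> s)"
proof -
  assume c: "p \<in> carrier R" "q \<in> carrier R" "r \<in> carrier R" "s \<in> carrier R"
  have "\<ominus> (r \<oplus> s) = \<ominus> r \<oplus> \<ominus> s" using c by (simp add: minus_add)
  then have "(p \<oplus> q) \<ominus> (r \<oplus> s) = (p \<oplus> q) \<oplus> (\<ominus> r \<oplus> \<ominus> s)" by (simp add: a_minus_def)
  also have "\<dots> = (p \<oplus> \<ominus> r) \<oplus> (q \<oplus> \<ominus> s)" using c by (simp add: a_ac)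
  finally show ?thesis by (simp add: a_minus_def)
qed
lemma eq_diff: "x \<in> carrier R \<Longrightarrow> y \<in> carrier R \<Longrightarrow> x \<oplus> y = z \<Longrightarrow> x = z \<ominus> y"
  by (drule sym) (simp add: diff1)
end

locale msetup = tsetup A B phi es W P
  for A :: "'a ring" and B :: "'b ring" and phi es and W :: "'w ring" and P +
  fixes d :: "'a \<Rightarrow> 'a" and D :: "'d ring" and phiD :: "'b \<Rightarrow> 'd" and dD :: "'d \<Rightarrow> 'd"
    and u :: "'d \<Rightarrow> nat \<Rightarrow> 'w"
  assumes d: "derivation A d" and cD: "cring D" and phiD: "phiD \<in> ring_hom B D"
    and dD: "derivation D dD"
    and u: "u \<in> ring_hom D T"
    and u_inr: "\<And>b. b \<in> carrier B \<Longrightarrow> u (phiD b) = tensor_inr A B phi es W P b"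
begin

sublocale DW: cring "dual W" by (rule W.dual_cring)
sublocale Dr: cring D by (rule cD)

lemma dA_cl [simp]: "a \<in> carrier A \<Longrightarrow> d a \<in> carrier A"
  using d unfolding derivation_def by auto
lemma dD_cl [simp]: "x \<in> carrier D \<Longrightarrow> dD x \<in> carrier D"
  using dD unfolding derivation_def by auto
lemma u_cl [simp]: "x \<in> carrier D \<Longrightarrow> u x \<in> {..<n} \<rightarrow>\<^sub>E carrier W"
  using ring_hom_closed[OF u] T_carrier by auto
lemma u_add: "x \<in> carrier D \<Longrightarrow> y \<in> carrier D \<Longrightarrow> u (x \<oplus>\<^bsub>D\<^esub> y) = add T (u x) (u y)"
  using ring_hom_add[OF u] by auto
lemma u_mult: "x \<in> carrier D \<Longrightarrow> y \<in> carrier D \<Longrightarrow> u (x \<otimes>\<^bsub>D\<^esub> y) = mult T (u x) (u y)"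
  using ring_hom_mult[OF u] by auto
lemma phiD_cl [simp]: "b \<in> carrier B \<Longrightarrow> phiD b \<in> carrier D"
  using ring_hom_closed[OF phiD] by auto

definition psi :: "'a \<Rightarrow> 'w \<times> 'w" where "psi a = (P a, P (d a))"
definition psi0 :: "'a \<Rightarrow> 'w \<times> 'w" where "psi0 a = (P a, \<zero>\<^bsub>W\<^esub>)"

lemma psi_hom: "psi \<in> ring_hom A (dual W)"
proof (rule ring_hom_memI)
  fix x y assume xy: "x \<in> carrier A" "y \<in> carrier A"
  have "d (x \<otimes>\<^bsub>A\<^esub> y) = d x \<otimes>\<^bsub>A\<^esub> y \<oplus>\<^bsub>A\<^esub> x \<otimes>\<^bsub>A\<^esub> d y"
    using d xy unfolding derivation_def by auto
  then show "psi (x \<otimes>\<^bsub>A\<^esub> y) = psi x \<otimes>\<^bsub>dual W\<^esub> psi y"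
    using xy by (simp add: psi_def dual_simps W.a_comm)
  have "d (x \<oplus>\<^bsub>A\<^esub> y) = d x \<oplus>\<^bsub>A\<^esub> d y"
    using d xy unfolding derivation_def by auto
  then show "psi (x \<oplus>\<^bsub>A\<^esub> y) = psi x \<oplus>\<^bsub>dual W\<^esub> psi y"
    using xy by (simp add: psi_def dual_simps)
qed (auto simp: psi_def dual_simps A.deriv_one[OF d])

lemma psi0_hom: "psi0 \<in> ring_hom A (dual W)"
  by (rule ring_hom_memI) (auto simp: psi0_def dual_simps)

lemma dual_tensor_mult:
  assumes Q: "\<And>a. a \<in> carrier A \<Longrightarrow> Q a \<in> carrier W"
    and F: "F \<in> {..<n} \<rightarrow>\<^sub>E carrier W \<times> carrier W" and G: "G \<in> {..<n} \<rightarrow>\<^sub>E carrier W \<times> carrier W"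
    and k: "k < n"
  shows "mult (tensor A B phi es (dual W) (\<lambda>a. (P a, Q a))) F G k =
    ((\<Oplus>\<^bsub>W\<^esub>i\<in>{..<n}. \<Oplus>\<^bsub>W\<^esub>j\<in>{..<n}. (fst (F i) \<otimes>\<^bsub>W\<^esub> fst (G j)) \<otimes>\<^bsub>W\<^esub> P (cst i j k)),
     (\<Oplus>\<^bsub>W\<^esub>i\<in>{..<n}. \<Oplus>\<^bsub>W\<^esub>j\<in>{..<n}. (fst (F i) \<otimes>\<^bsub>W\<^esub> fst (G j)) \<otimes>\<^bsub>W\<^esub> Q (cst i j k) \<oplus>\<^bsub>W\<^esub>
        (fst (F i) \<otimes>\<^bsub>W\<^esub> snd (G j) \<oplus>\<^bsub>W\<^esub> snd (F i) \<otimes>\<^bsub>W\<^esub> fst (G j)) \<otimes>\<^bsub>W\<^esub> P (cst i j k)))"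
proof -
  have Fi: "\<And>i. i < n \<Longrightarrow> fst (F i) \<in> carrier W \<and> snd (F i) \<in> carrier W"
    using F by (auto simp: PiE_def Pi_def mem_Times_iff)
  have Gj: "\<And>j. j < n \<Longrightarrow> fst (G j) \<in> carrier W \<and> snd (G j) \<in> carrier W"
    using G by (auto simp: PiE_def Pi_def mem_Times_iff)
  define H where "H i j = (F i \<otimes>\<^bsub>dual W\<^esub> G j) \<otimes>\<^bsub>dual W\<^esub> (P (cst i j k), Q (cst i j k))" for i j
  have H: "\<And>i j. i < n \<Longrightarrow> j < n \<Longrightarrow> H i j =
      ((fst (F i) \<otimes>\<^bsub>W\<^esub> fst (G j)) \<otimes>\<^bsub>W\<^esub> P (cst i j k),
       (fst (F i) \<otimes>\<^bsub>W\<^esub> fst (G j)) \<otimes>\<^bsub>W\<^esub> Q (cst i j k) \<oplus>\<^bsub>W\<^esub>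
        (fst (F i) \<otimes>\<^bsub>W\<^esub> snd (G j) \<oplus>\<^bsub>W\<^esub> snd (F i) \<otimes>\<^bsub>W\<^esub> fst (G j)) \<otimes>\<^bsub>W\<^esub> P (cst i j k))"
    using Fi Gj k Q by (simp add: H_def dual_simps W.a_comm)
  have Hc: "\<And>i j. i < n \<Longrightarrow> j < n \<Longrightarrow> H i j \<in> carrier W \<times> carrier W"
    using Fi Gj k Q H by simp
  have inner: "\<And>i. i < n \<Longrightarrow> finsum (dual W) (H i) {..<n} = (\<Oplus>\<^bsub>W\<^esub>j\<in>{..<n}. fst (H i j), \<Oplus>\<^bsub>W\<^esub>j\<in>{..<n}. snd (H i j))"
    using Hc by (intro W.dual_finsum) auto
  have "mult (tensor A B phi es (dual W) (\<lambda>a. (P a, Q a))) F G k = finsum (dual W) (\<lambda>i. finsum (dual W) (H i) {..<n}) {..<n}"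
    using k unfolding H_def by (simp add: tensor_def)
  also have "\<dots> = (\<Oplus>\<^bsub>W\<^esub>i\<in>{..<n}. fst (finsum (dual W) (H i) {..<n}), \<Oplus>\<^bsub>W\<^esub>i\<in>{..<n}. snd (finsum (dual W) (H i) {..<n}))"
    using Hc inner by (intro W.dual_finsum) (auto intro!: W.finsum_closed' simp: mem_Times_iff)
  also have "\<dots> = ((\<Oplus>\<^bsub>W\<^esub>i\<in>{..<n}. \<Oplus>\<^bsub>W\<^esub>j\<in>{..<n}. fst (H i j)), (\<Oplus>\<^bsub>W\<^esub>i\<in>{..<n}. \<Oplus>\<^bsub>W\<^esub>j\<in>{..<n}. snd (H i j)))"
    using inner by (simp cong: finsum_cong_simp)
  finally show ?thesis using H by (simp cong: finsum_cong_simp)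
qed

definition fmap :: "('b \<Rightarrow> 'b) \<Rightarrow> 'd \<Rightarrow> nat \<Rightarrow> 'w \<times> 'w" where
  "fmap dlt x = (\<lambda>k\<in>{..<n}. (u x k, u (dD x) k \<ominus>\<^bsub>W\<^esub> Lv dlt (u x) k))"

lemma psi_eq: "psi = (\<lambda>a. (P a, P (d a)))" by (simp add: psi_def[abs_def])
lemma psi0_eq: "psi0 = (\<lambda>a. (P a, \<zero>\<^bsub>W\<^esub>))" by (simp add: psi0_def[abs_def])

lemma dD_add: "x \<in> carrier D \<Longrightarrow> y \<in> carrier D \<Longrightarrow> dD (x \<oplus>\<^bsub>D\<^esub> y) = dD x \<oplus>\<^bsub>D\<^esub> dD y"
  using dD unfolding derivation_def by auto
lemma dD_mult: "x \<in> carrier D \<Longrightarrow> y \<in> carrier D \<Longrightarrow> dD (x \<otimes>\<^bsub>D\<^esub> y) = dD x \<otimes>\<^bsub>D\<^esub> y \<oplus>\<^bsub>D\<^esub> x \<otimes>\<^bsub>D\<^esub> dD y"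
  using dD unfolding derivation_def by auto

context
  fixes dlt
  assumes delta: "derivation B dlt"
    and compat: "\<And>a. a \<in> carrier A \<Longrightarrow> dlt (phi a) = phi (d a)"
    and dDc: "\<And>b. b \<in> carrier B \<Longrightarrow> phiD (dlt b) = dD (phiD b)"
begin

lemma dlt_cl [simp]: "b \<in> carrier B \<Longrightarrow> dlt b \<in> carrier B"
  using delta unfolding derivation_def by auto

lemma Lv_add:
  assumes a: "a \<in> {..<n} \<rightarrow>\<^sub>E carrier W" and b: "b \<in> {..<n} \<rightarrow>\<^sub>E carrier W" and k: "k < n"
  shows "Lv dlt (add T a b) k = Lv dlt a k \<oplus>\<^bsub>W\<^esub> Lv dlt b k"
proof -
  have "Lv dlt (add T a b) k
     = (\<Oplus>\<^bsub>W\<^esub>j\<in>{..<n}. a j \<otimes>\<^bsub>W\<^esub> P (cf (dlt (es!j)) k) \<oplus>\<^bsub>W\<^esub> b j \<otimes>\<^bsub>W\<^esub> P (cf (dlt (es!j)) k))"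
    using a b k unfolding Lv_k[OF k] by (intro finsum_cong_all) (simp add: T_add_k W.l_distr)
  also have "\<dots> = Lv dlt a k \<oplus>\<^bsub>W\<^esub> Lv dlt b k"
    using a b k unfolding Lv_k[OF k] by (intro W.finsum_addf') auto
  finally show ?thesis .
qed

lemma Lv_k_cl [simp]: "a \<in> {..<n} \<rightarrow>\<^sub>E carrier W \<Longrightarrow> k < n \<Longrightarrow> Lv dlt a k \<in> carrier W"
  using Lv_closed[of a dlt] by auto

lemma fmap_cl: "x \<in> carrier D \<Longrightarrow> fmap dlt x \<in> {..<n} \<rightarrow>\<^sub>E carrier W \<times> carrier W"
  by (auto simp: fmap_def)

lemma fmap_k: "k < n \<Longrightarrow> fmap dlt x k = (u x k, u (dD x) k \<ominus>\<^bsub>W\<^esub> Lv dlt (u x) k)"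
  by (simp add: fmap_def)

lemma fmap_inr:
  assumes b: "b \<in> carrier B"
  shows "fmap dlt (phiD b) = tensor_inr A B phi es (dual W) psi b"
proof
  fix k show "fmap dlt (phiD b) k = tensor_inr A B phi es (dual W) psi b k"
  proof (cases "k < n")
    case False then show ?thesis by (simp add: fmap_def tensor_inr_def)
  next
    case k: True
    have u1: "u (phiD b) k = P (cf b k)" using b k by (simp add: u_inr tensor_inr_def)
    have "u (dD (phiD b)) = u (phiD (dlt b))" using b by (simp add: dDc)
    then have "u (dD (phiD b)) k = P (cf (dlt b) k)" using b k by (simp add: u_inr tensor_inr_def)
    also have "\<dots> = P (d (cf b k)) \<oplus>\<^bsub>W\<^esub> P (\<Oplus>\<^bsub>A\<^esub>j\<in>{..<n}. cf b j \<otimes>\<^bsub>A\<^esub> cf (dlt (es!j)) k)"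
      using b k by (simp add: cf_deriv[OF d delta compat b k] A.finsum_closed')
    finally have u2: "u (dD (phiD b)) k = P (d (cf b k)) \<oplus>\<^bsub>W\<^esub> P (\<Oplus>\<^bsub>A\<^esub>j\<in>{..<n}. cf b j \<otimes>\<^bsub>A\<^esub> cf (dlt (es!j)) k)" .
    have "Lv dlt (u (phiD b)) k = (\<Oplus>\<^bsub>W\<^esub>j\<in>{..<n}. P (cf b j \<otimes>\<^bsub>A\<^esub> cf (dlt (es!j)) k))"
      using b k by (simp add: Lv_k) (intro finsum_cong_all, simp add: u_inr tensor_inr_def)
    also have "\<dots> = P (\<Oplus>\<^bsub>A\<^esub>j\<in>{..<n}. cf b j \<otimes>\<^bsub>A\<^esub> cf (dlt (es!j)) k)"
      using b k by (subst pw.hom_finsum) (auto simp: comp_def)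
    finally have u3: "Lv dlt (u (phiD b)) k = P (\<Oplus>\<^bsub>A\<^esub>j\<in>{..<n}. cf b j \<otimes>\<^bsub>A\<^esub> cf (dlt (es!j)) k)" .
    show ?thesis using b k u1 u2 u3
      by (simp add: fmap_k tensor_inr_def psi_def W.diff1 A.finsum_closed')
  qed
qed

lemma fmap_add:
  assumes x: "x \<in> carrier D" and y: "y \<in> carrier D"
  shows "fmap dlt (x \<oplus>\<^bsub>D\<^esub> y) = add (tensor A B phi es (dual W) psi) (fmap dlt x) (fmap dlt y)"
proof
  fix k show "fmap dlt (x \<oplus>\<^bsub>D\<^esub> y) k = add (tensor A B phi es (dual W) psi) (fmap dlt x) (fmap dlt y) k"
  proof (cases "k < n")
    case False then show ?thesis by (simp add: fmap_def tensor_def)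
  next
    case k: True
    have L: "Lv dlt (add T (u x) (u y)) k = Lv dlt (u x) k \<oplus>\<^bsub>W\<^esub> Lv dlt (u y) k"
      using x y k by (simp add: Lv_add)
    have "fmap dlt (x \<oplus>\<^bsub>D\<^esub> y) k = (u x k \<oplus>\<^bsub>W\<^esub> u y k,
       (u (dD x) k \<oplus>\<^bsub>W\<^esub> u (dD y) k) \<ominus>\<^bsub>W\<^esub> (Lv dlt (u x) k \<oplus>\<^bsub>W\<^esub> Lv dlt (u y) k))"
      using x y k by (simp add: fmap_k u_add dD_add L T_add_k)
    then show ?thesis using x y k
      by (simp add: tensor_def dual_simps fmap_k W.diff3)
  qed
qed

lemma fmap_one: "fmap dlt \<one>\<^bsub>D\<^esub> = one (tensor A B phi es (dual W) psi)"
proof -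
  have "fmap dlt \<one>\<^bsub>D\<^esub> = fmap dlt (phiD \<one>\<^bsub>B\<^esub>)" using ring_hom_one[OF phiD] by simp
  also have "\<dots> = tensor_inr A B phi es (dual W) psi \<one>\<^bsub>B\<^esub>" by (simp add: fmap_inr)
  also have "\<dots> = one (tensor A B phi es (dual W) psi)" by (simp add: tensor_inr_def tensor_def)
  finally show ?thesis .
qed

lemma fmap_mult:
  assumes x: "x \<in> carrier D" and y: "y \<in> carrier D"
  shows "fmap dlt (x \<otimes>\<^bsub>D\<^esub> y) = mult (tensor A B phi es (dual W) psi) (fmap dlt x) (fmap dlt y)"
proof
  fix k show "fmap dlt (x \<otimes>\<^bsub>D\<^esub> y) k = mult (tensor A B phi es (dual W) psi) (fmap dlt x) (fmap dlt y) k"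
  proof (cases "k < n")
    case False then show ?thesis by (simp add: fmap_def tensor_def)
  next
    case k: True
    define a where "a = u x"
    define b where "b = u y"
    define a' where "a' = (\<lambda>k\<in>{..<n}. u (dD x) k \<ominus>\<^bsub>W\<^esub> Lv dlt a k)"
    define b' where "b' = (\<lambda>k\<in>{..<n}. u (dD y) k \<ominus>\<^bsub>W\<^esub> Lv dlt b k)"
    have ac: "a \<in> {..<n} \<rightarrow>\<^sub>E carrier W" "b \<in> {..<n} \<rightarrow>\<^sub>E carrier W"
      using x y by (auto simp: a_def b_def)
    have a'c: "a' \<in> {..<n} \<rightarrow>\<^sub>E carrier W" "b' \<in> {..<n} \<rightarrow>\<^sub>E carrier W"
      using x y ac by (auto simp: a'_def b'_def)
    have Fx: "\<And>i. i < n \<Longrightarrow> fst (fmap dlt x i) = a i \<and> snd (fmap dlt x i) = a' i"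
      by (simp add: fmap_k a_def a'_def)
    have Fy: "\<And>i. i < n \<Longrightarrow> fst (fmap dlt y i) = b i \<and> snd (fmap dlt y i) = b' i"
      by (simp add: fmap_k b_def b'_def)
    have Qc: "\<And>a. a \<in> carrier A \<Longrightarrow> P (d a) \<in> carrier W" by simp
    have "mult (tensor A B phi es (dual W) psi) (fmap dlt x) (fmap dlt y) k =
      ((\<Oplus>\<^bsub>W\<^esub>i\<in>{..<n}. \<Oplus>\<^bsub>W\<^esub>j\<in>{..<n}. (fst (fmap dlt x i) \<otimes>\<^bsub>W\<^esub> fst (fmap dlt y j)) \<otimes>\<^bsub>W\<^esub> P (cst i j k)),
       (\<Oplus>\<^bsub>W\<^esub>i\<in>{..<n}. \<Oplus>\<^bsub>W\<^esub>j\<in>{..<n}. (fst (fmap dlt x i) \<otimes>\<^bsub>W\<^esub> fst (fmap dlt y j)) \<otimes>\<^bsub>W\<^esub> P (d (cst i j k)) \<oplus>\<^bsub>W\<^esub>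
        (fst (fmap dlt x i) \<otimes>\<^bsub>W\<^esub> snd (fmap dlt y j) \<oplus>\<^bsub>W\<^esub> snd (fmap dlt x i) \<otimes>\<^bsub>W\<^esub> fst (fmap dlt y j)) \<otimes>\<^bsub>W\<^esub> P (cst i j k)))"
      unfolding psi_eq using dual_tensor_mult[OF Qc fmap_cl[OF x] fmap_cl[OF y] k] .
    also have "\<dots> = ((\<Oplus>\<^bsub>W\<^esub>i\<in>{..<n}. \<Oplus>\<^bsub>W\<^esub>j\<in>{..<n}. (a i \<otimes>\<^bsub>W\<^esub> b j) \<otimes>\<^bsub>W\<^esub> P (cst i j k)),
       (\<Oplus>\<^bsub>W\<^esub>i\<in>{..<n}. \<Oplus>\<^bsub>W\<^esub>j\<in>{..<n}. (a i \<otimes>\<^bsub>W\<^esub> b j) \<otimes>\<^bsub>W\<^esub> P (d (cst i j k)) \<oplus>\<^bsub>W\<^esub>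
        ((a i \<otimes>\<^bsub>W\<^esub> b' j) \<otimes>\<^bsub>W\<^esub> P (cst i j k) \<oplus>\<^bsub>W\<^esub> (a' i \<otimes>\<^bsub>W\<^esub> b j) \<otimes>\<^bsub>W\<^esub> P (cst i j k))))"
      using Fx Fy ac a'c k by (simp add: W.l_distr cong: finsum_cong_simp)
    also have "\<dots> = (mult T a b k, bil a b (\<lambda>i j. d (cst i j k)) \<oplus>\<^bsub>W\<^esub> (mult T a b' k \<oplus>\<^bsub>W\<^esub> mult T a' b k))"
      using ac a'c k by (simp add: sum2_add T_mult_k bil_def)
    finally have R: "mult (tensor A B phi es (dual W) psi) (fmap dlt x) (fmap dlt y) k
       = (mult T a b k, bil a b (\<lambda>i j. d (cst i j k)) \<oplus>\<^bsub>W\<^esub> (mult T a b' k \<oplus>\<^bsub>W\<^esub> mult T a' b k))" .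
    have ux: "u (dD x) = add T a' (Lv dlt a)"
      using x ac a'c by (intro vec_eqI) (auto simp: T_add_k a'_def W.diff2)
    have uy: "u (dD y) = add T b' (Lv dlt b)"
      using y ac a'c by (intro vec_eqI) (auto simp: T_add_k b'_def W.diff2)
    have "u (dD (x \<otimes>\<^bsub>D\<^esub> y)) = add T (mult T (u (dD x)) b) (mult T a (u (dD y)))"
      using x y by (simp add: dD_mult u_add u_mult a_def b_def)
    also have "\<dots> = add T (add T (mult T a' b) (mult T (Lv dlt a) b)) (add T (mult T a b') (mult T a (Lv dlt b)))"
      using ac a'c by (simp add: ux uy T_l_distr T_r_distr)
    finally have "u (dD (x \<otimes>\<^bsub>D\<^esub> y)) k = (mult T a' b k \<oplus>\<^bsub>W\<^esub> mult T (Lv dlt a) b k) \<oplus>\<^bsub>W\<^esub> (mult T a b' k \<oplus>\<^bsub>W\<^esub> mult T a (Lv dlt b) k)"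
      using k by (simp add: T_add_k)
    moreover have KW': "mult T a (Lv dlt b) k \<oplus>\<^bsub>W\<^esub> mult T (Lv dlt a) b k
       = bil a b (\<lambda>i j. d (cst i j k)) \<oplus>\<^bsub>W\<^esub> Lv dlt (mult T a b) k"
      using KW[OF d delta compat ac k] .
    moreover have cl: "mult T a' b k \<in> carrier W" "mult T (Lv dlt a) b k \<in> carrier W"
      "mult T a b' k \<in> carrier W" "mult T a (Lv dlt b) k \<in> carrier W"
      "bil a b (\<lambda>i j. d (cst i j k)) \<in> carrier W" "Lv dlt (mult T a b) k \<in> carrier W"
      using ac a'c k by auto
    ultimately have "bil a b (\<lambda>i j. d (cst i j k)) \<oplus>\<^bsub>W\<^esub> (mult T a b' k \<oplus>\<^bsub>W\<^esub> mult T a' b k)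
       = u (dD (x \<otimes>\<^bsub>D\<^esub> y)) k \<ominus>\<^bsub>W\<^esub> Lv dlt (mult T a b) k"
      by (intro W.eq_diff) (simp_all add: W.a_ac)
    then show ?thesis using R x y k by (simp add: fmap_k u_mult a_def b_def)
  qed
qed

lemma fmap_hom: "fmap dlt \<in> ring_hom D (tensor A B phi es (dual W) psi)"
  by (rule ring_hom_memI) (auto simp: fmap_add fmap_mult fmap_one fmap_cl tensor_def dual_simps)

end

end



context msetup
begin

definition f0 :: "'d \<Rightarrow> nat \<Rightarrow> 'w \<times> 'w" where
  "f0 x = (\<lambda>k\<in>{..<n}. (u x k, \<zero>\<^bsub>W\<^esub>))"

lemma f0_k: "k < n \<Longrightarrow> f0 x k = (u x k, \<zero>\<^bsub>W\<^esub>)" by (simp add: f0_def)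

lemma f0_cl: "x \<in> carrier D \<Longrightarrow> f0 x \<in> {..<n} \<rightarrow>\<^sub>E carrier W \<times> carrier W"
  by (auto simp: f0_def)

lemma f0_hom: "f0 \<in> ring_hom D (tensor A B phi es (dual W) psi0)"
proof (rule ring_hom_memI)
  fix x assume "x \<in> carrier D" then show "f0 x \<in> carrier (tensor A B phi es (dual W) psi0)"
    using f0_cl by (simp add: tensor_def dual_simps)
next
  fix x y assume x: "x \<in> carrier D" and y: "y \<in> carrier D"
  show "f0 (x \<otimes>\<^bsub>D\<^esub> y) = mult (tensor A B phi es (dual W) psi0) (f0 x) (f0 y)"
  proof
    fix k show "f0 (x \<otimes>\<^bsub>D\<^esub> y) k = mult (tensor A B phi es (dual W) psi0) (f0 x) (f0 y) k"
    proof (cases "k < n")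
      case False then show ?thesis by (simp add: f0_def tensor_def)
    next
      case k: True
      have Qc: "\<And>a. a \<in> carrier A \<Longrightarrow> (\<lambda>_. \<zero>\<^bsub>W\<^esub>) a \<in> carrier W" by simp
      have "mult (tensor A B phi es (dual W) psi0) (f0 x) (f0 y) k =
        ((\<Oplus>\<^bsub>W\<^esub>i\<in>{..<n}. \<Oplus>\<^bsub>W\<^esub>j\<in>{..<n}. (fst (f0 x i) \<otimes>\<^bsub>W\<^esub> fst (f0 y j)) \<otimes>\<^bsub>W\<^esub> P (cst i j k)),
         (\<Oplus>\<^bsub>W\<^esub>i\<in>{..<n}. \<Oplus>\<^bsub>W\<^esub>j\<in>{..<n}. (fst (f0 x i) \<otimes>\<^bsub>W\<^esub> fst (f0 y j)) \<otimes>\<^bsub>W\<^esub> \<zero>\<^bsub>W\<^esub> \<oplus>\<^bsub>W\<^esub>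
          (fst (f0 x i) \<otimes>\<^bsub>W\<^esub> snd (f0 y j) \<oplus>\<^bsub>W\<^esub> snd (f0 x i) \<otimes>\<^bsub>W\<^esub> fst (f0 y j)) \<otimes>\<^bsub>W\<^esub> P (cst i j k)))"
        unfolding psi0_eq using dual_tensor_mult[OF Qc f0_cl[OF x] f0_cl[OF y] k] .
      also have "\<dots> = (mult T (u x) (u y) k, \<Oplus>\<^bsub>W\<^esub>i\<in>{..<n}. \<Oplus>\<^bsub>W\<^esub>j\<in>{..<n}. \<zero>\<^bsub>W\<^esub>)"
        using x y k by (simp add: f0_k T_mult_k cong: finsum_cong_simp)
      also have "\<dots> = (mult T (u x) (u y) k, \<zero>\<^bsub>W\<^esub>)"
        by (simp add: W.finsum_zero)
      finally show ?thesis using x y k by (simp add: f0_k u_mult)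
    qed
  qed
next
  fix x y assume x: "x \<in> carrier D" and y: "y \<in> carrier D"
  show "f0 (x \<oplus>\<^bsub>D\<^esub> y) = add (tensor A B phi es (dual W) psi0) (f0 x) (f0 y)"
    using x y by (auto simp: f0_def tensor_def dual_simps u_add T_add_k)
next
  have "u \<one>\<^bsub>D\<^esub> = one T" using ring_hom_one[OF u] by simp
  then show "f0 \<one>\<^bsub>D\<^esub> = one (tensor A B phi es (dual W) psi0)"
    by (auto simp: f0_def tensor_def psi0_def)
qed

lemma f0_inr: "b \<in> carrier B \<Longrightarrow> f0 (phiD b) = tensor_inr A B phi es (dual W) psi0 b"
  by (auto simp: f0_def tensor_inr_def u_inr psi0_def)

lemma fmap_k0: "k < n \<Longrightarrow> fmap dlt x k = (u x k, u (dD x) k \<ominus>\<^bsub>W\<^esub> Lv dlt (u x) k)"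
  by (simp add: fmap_def)

lemma tmap_k: "k < n \<Longrightarrow> tensor_map es h v k = h (v k)"
  by (simp add: tensor_map_def)

lemma fmap_indep:
  assumes dl1: "derivation B dl1" "\<And>a. a \<in> carrier A \<Longrightarrow> dl1 (phi a) = phi (d a)"
      "\<And>b. b \<in> carrier B \<Longrightarrow> phiD (dl1 b) = dD (phiD b)"
    and dl2: "derivation B dl2" "\<And>a. a \<in> carrier A \<Longrightarrow> dl2 (phi a) = phi (d a)"
      "\<And>b. b \<in> carrier B \<Longrightarrow> phiD (dl2 b) = dD (phiD b)"
  shows "fmap dl1 = fmap dl2"
proof -
  have cl1: "\<And>b. b \<in> carrier B \<Longrightarrow> dl1 b \<in> carrier B" using dl1 unfolding derivation_def by auto
  have cl2: "\<And>b. b \<in> carrier B \<Longrightarrow> dl2 b \<in> carrier B" using dl2 unfolding derivation_def by auto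
  have e: "\<And>j k. j < n \<Longrightarrow> k < n \<Longrightarrow> P (cf (dl1 (es!j)) k) = P (cf (dl2 (es!j)) k)"
  proof -
    fix j k assume j: "j < n" and k: "k < n"
    have "tensor_inr A B phi es W P (dl1 (es!j)) = tensor_inr A B phi es W P (dl2 (es!j))"
      using j dl1 dl2 cl1 cl2 u_inr[symmetric] by (metis es_closed)
    then show "P (cf (dl1 (es!j)) k) = P (cf (dl2 (es!j)) k)"
      using k by (metis (no_types, lifting) lessThan_iff restrict_apply' tensor_inr_def)
  qed
  have "\<And>v. Lv dl1 v = Lv dl2 v"
  proof -
    fix v
    show "Lv dl1 v = Lv dl2 v"
      unfolding Lv_def
    proof (rule restrict_ext)
      fix k assume k: "k \<in> {..<n}"
      show "(\<Oplus>\<^bsub>W\<^esub>j\<in>{..<n}. v j \<otimes>\<^bsub>W\<^esub> P (cf (dl1 (es!j)) k)) = (\<Oplus>\<^bsub>W\<^esub>j\<in>{..<n}. v j \<otimes>\<^bsub>W\<^esub> P (cf (dl2 (es!j)) k))"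
        using e k by (intro finsum_cong_all) auto
    qed
  qed
  then show ?thesis unfolding fmap_def by simp
qed

lemma cond_hom:
  assumes dlt: "derivation B dlt" "\<And>a. a \<in> carrier A \<Longrightarrow> dlt (phi a) = phi (d a)"
      "\<And>b. b \<in> carrier B \<Longrightarrow> phiD (dlt b) = dD (phiD b)"
    and c: "weil_deriv_cond A d B phi es dlt D dD W P u dW'"
  shows "(\<lambda>w. (w, dW' w)) \<in> ring_hom W (dual W)"
    and "\<And>a. a \<in> carrier A \<Longrightarrow> (\<lambda>w. (w, dW' w)) (P a) = psi a"
    and "\<And>x. x \<in> carrier D \<Longrightarrow> tensor_map es (\<lambda>w. (w, dW' w)) (u x) = fmap dlt x"
proof -
  have dW: "derivation W dW'" and cW: "\<And>a. a \<in> carrier A \<Longrightarrow> dW' (P a) = P (d a)"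
    and cu: "\<And>x. x \<in> carrier D \<Longrightarrow> u (dD x) = tensor_deriv A B phi es W P dW' dlt (u x)"
    using c unfolding weil_deriv_cond_def diff_hom_def by auto
  have dWc: "\<And>x. x \<in> carrier W \<Longrightarrow> dW' x \<in> carrier W" using dW unfolding derivation_def by auto
  show "(\<lambda>w. (w, dW' w)) \<in> ring_hom W (dual W)"
  proof (rule ring_hom_memI)
    fix x y assume xy: "x \<in> carrier W" "y \<in> carrier W"
    have "dW' (x \<otimes>\<^bsub>W\<^esub> y) = dW' x \<otimes>\<^bsub>W\<^esub> y \<oplus>\<^bsub>W\<^esub> x \<otimes>\<^bsub>W\<^esub> dW' y"
      using dW xy unfolding derivation_def by auto
    then show "(x \<otimes>\<^bsub>W\<^esub> y, dW' (x \<otimes>\<^bsub>W\<^esub> y)) = (x, dW' x) \<otimes>\<^bsub>dual W\<^esub> (y, dW' y)"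
      using xy dWc by (simp add: dual_simps W.a_comm)
    have "dW' (x \<oplus>\<^bsub>W\<^esub> y) = dW' x \<oplus>\<^bsub>W\<^esub> dW' y"
      using dW xy unfolding derivation_def by auto
    then show "(x \<oplus>\<^bsub>W\<^esub> y, dW' (x \<oplus>\<^bsub>W\<^esub> y)) = (x, dW' x) \<oplus>\<^bsub>dual W\<^esub> (y, dW' y)"
      by (simp add: dual_simps)
  qed (auto simp: dual_simps dWc W.deriv_one[OF dW])
  show "\<And>a. a \<in> carrier A \<Longrightarrow> (\<lambda>w. (w, dW' w)) (P a) = psi a"
    by (simp add: psi_def cW)
  have compat: "\<And>a. a \<in> carrier A \<Longrightarrow> dlt (phi a) = phi (d a)" using dlt by blast
  have td: "tensor_deriv A B phi es W P dW' dlt = E0 dW' dlt"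
    by (rule tensor_deriv_eq[OF d dlt(1) compat dW cW])
  show "\<And>x. x \<in> carrier D \<Longrightarrow> tensor_map es (\<lambda>w. (w, dW' w)) (u x) = fmap dlt x"
  proof
    fix x k assume x: "x \<in> carrier D"
    show "tensor_map es (\<lambda>w. (w, dW' w)) (u x) k = fmap dlt x k"
    proof (cases "k < n")
      case False then show ?thesis by (simp add: tensor_map_def fmap_def)
    next
      case k: True
      have "u (dD x) k = dW' (u x k) \<oplus>\<^bsub>W\<^esub> Lv dlt (u x) k"
        using cu[OF x] td x k E0_k[OF d dlt(1) compat dW cW, of "u x" k] by (simp add: Lv_k)
      moreover have "Lv dlt (u x) k \<in> carrier W" using x k dlt compat by (simp add: Lv_k_cl)
      ultimately show ?thesis using x k dWc by (simp add: tmap_k fmap_k0 W.diff1)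
    qed
  qed
qed

context
  assumes wd: "is_weil_descent A B phi es D phiD W P u"
begin

lemma UP:
  assumes "cring (C :: ('w \<times> 'w) ring)" "ps \<in> ring_hom A C" "f \<in> ring_hom D (tensor A B phi es C ps)"
    "\<And>b. b \<in> carrier B \<Longrightarrow> f (phiD b) = tensor_inr A B phi es C ps b"
  shows "\<exists>g. g \<in> ring_hom W C \<and> (\<forall>a\<in>carrier A. g (P a) = ps a) \<and>
             (\<forall>x\<in>carrier D. tensor_map es g (u x) = f x) \<and>
             (\<forall>g'. g' \<in> ring_hom W C \<and> (\<forall>a\<in>carrier A. g' (P a) = ps a) \<and>
                   (\<forall>x\<in>carrier D. tensor_map es g' (u x) = f x) \<longrightarrow>
                   (\<forall>w\<in>carrier W. g' w = g w))"
  using wd assms unfolding is_weil_descent_def by blast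

context
  fixes dlt
  assumes dlt: "derivation B dlt" "\<And>a. a \<in> carrier A \<Longrightarrow> dlt (phi a) = phi (d a)"
      "\<And>b. b \<in> carrier B \<Longrightarrow> phiD (dlt b) = dD (phiD b)"
begin

lemma main_exists:
  "\<exists>dW. weil_deriv_cond A d B phi es dlt D dD W P u dW \<and>
     (\<forall>dW'. weil_deriv_cond A d B phi es dlt D dD W P u dW' \<longrightarrow> (\<forall>w\<in>carrier W. dW' w = dW w))"
proof -
  obtain g where g: "g \<in> ring_hom W (dual W)" "\<forall>a\<in>carrier A. g (P a) = psi a"
      "\<forall>x\<in>carrier D. tensor_map es g (u x) = fmap dlt x"
      and guniq: "\<forall>g'. g' \<in> ring_hom W (dual W) \<and> (\<forall>a\<in>carrier A. g' (P a) = psi a) \<and>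
                   (\<forall>x\<in>carrier D. tensor_map es g' (u x) = fmap dlt x) \<longrightarrow>
                   (\<forall>w\<in>carrier W. g' w = g w)"
    using UP[OF W.dual_cring psi_hom fmap_hom[OF dlt] fmap_inr[OF dlt]] by blast
  obtain g0 where g0uniq: "\<forall>g'. g' \<in> ring_hom W (dual W) \<and> (\<forall>a\<in>carrier A. g' (P a) = psi0 a) \<and>
                   (\<forall>x\<in>carrier D. tensor_map es g' (u x) = f0 x) \<longrightarrow>
                   (\<forall>w\<in>carrier W. g' w = g0 w)"
    using UP[OF W.dual_cring psi0_hom f0_hom f0_inr] by blast
  have gc: "\<And>w. w \<in> carrier W \<Longrightarrow> g w \<in> carrier W \<times> carrier W"
    using ring_hom_closed[OF g(1)] by (simp add: dual_simps)
  have h1: "(\<lambda>w. (fst (g w), \<zero>\<^bsub>W\<^esub>)) \<in> ring_hom W (dual W) \<and> (\<forall>a\<in>carrier A. (\<lambda>w. (fst (g w), \<zero>\<^bsub>W\<^esub>)) (P a) = psi0 a) \<and>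
       (\<forall>x\<in>carrier D. tensor_map es (\<lambda>w. (fst (g w), \<zero>\<^bsub>W\<^esub>)) (u x) = f0 x)"
  proof (intro conjI ballI)
    show "(\<lambda>w. (fst (g w), \<zero>\<^bsub>W\<^esub>)) \<in> ring_hom W (dual W)"
    proof (rule ring_hom_memI)
      fix x y assume xy: "x \<in> carrier W" "y \<in> carrier W"
      show "(fst (g (x \<otimes>\<^bsub>W\<^esub> y)), \<zero>\<^bsub>W\<^esub>) = (fst (g x), \<zero>\<^bsub>W\<^esub>) \<otimes>\<^bsub>dual W\<^esub> (fst (g y), \<zero>\<^bsub>W\<^esub>)"
        using xy gc ring_hom_mult[OF g(1) xy] by (simp add: dual_simps mem_Times_iff)
      show "(fst (g (x \<oplus>\<^bsub>W\<^esub> y)), \<zero>\<^bsub>W\<^esub>) = (fst (g x), \<zero>\<^bsub>W\<^esub>) \<oplus>\<^bsub>dual W\<^esub> (fst (g y), \<zero>\<^bsub>W\<^esub>)"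
        using xy gc ring_hom_add[OF g(1) xy] by (simp add: dual_simps mem_Times_iff)
    next
      fix x assume "x \<in> carrier W" then show "(fst (g x), \<zero>\<^bsub>W\<^esub>) \<in> carrier (dual W)"
        using gc by (auto simp: dual_simps mem_Times_iff)
    next
      show "(fst (g \<one>\<^bsub>W\<^esub>), \<zero>\<^bsub>W\<^esub>) = \<one>\<^bsub>dual W\<^esub>"
        using ring_hom_one[OF g(1)] by (simp add: dual_simps)
    qed
  next
    fix a assume "a \<in> carrier A" then show "(\<lambda>w. (fst (g w), \<zero>\<^bsub>W\<^esub>)) (P a) = psi0 a"
      using g(2) by (simp add: psi_def psi0_def)
  next
    fix x assume x: "x \<in> carrier D"
    show "tensor_map es (\<lambda>w. (fst (g w), \<zero>\<^bsub>W\<^esub>)) (u x) = f0 x"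
    proof
      fix k show "tensor_map es (\<lambda>w. (fst (g w), \<zero>\<^bsub>W\<^esub>)) (u x) k = f0 x k"
      proof (cases "k < n")
        case False then show ?thesis by (simp add: tensor_map_def f0_def)
      next
        case k: True
        have "g (u x k) = fmap dlt x k" using g(3) x k by (metis tmap_k)
        then show ?thesis using k by (simp add: tmap_k f0_k fmap_k0)
      qed
    qed
  qed
  have h2: "(\<lambda>w. (w, \<zero>\<^bsub>W\<^esub>)) \<in> ring_hom W (dual W) \<and> (\<forall>a\<in>carrier A. (\<lambda>w. (w, \<zero>\<^bsub>W\<^esub>)) (P a) = psi0 a) \<and>
       (\<forall>x\<in>carrier D. tensor_map es (\<lambda>w. (w, \<zero>\<^bsub>W\<^esub>)) (u x) = f0 x)"
  proof (intro conjI ballI)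
    show "(\<lambda>w. (w, \<zero>\<^bsub>W\<^esub>)) \<in> ring_hom W (dual W)"
      by (rule ring_hom_memI) (auto simp: dual_simps)
  next
    fix a assume "a \<in> carrier A" then show "(\<lambda>w. (w, \<zero>\<^bsub>W\<^esub>)) (P a) = psi0 a"
      by (simp add: psi0_def)
  next
    fix x assume x: "x \<in> carrier D"
    show "tensor_map es (\<lambda>w. (w, \<zero>\<^bsub>W\<^esub>)) (u x) = f0 x"
      by (simp add: tensor_map_def f0_def)
  qed
  have fstg: "\<And>w. w \<in> carrier W \<Longrightarrow> fst (g w) = w"
  proof -
    fix w assume w: "w \<in> carrier W"
    have "(fst (g w), \<zero>\<^bsub>W\<^esub>) = g0 w" using g0uniq h1 w by blast
    moreover have "(w, \<zero>\<^bsub>W\<^esub>) = g0 w" using g0uniq h2 w by blast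
    ultimately show "fst (g w) = w" by (metis prod.inject)
  qed
  define dW where "dW = (\<lambda>w. snd (g w))"
  have gW: "\<And>w. w \<in> carrier W \<Longrightarrow> g w = (w, dW w)"
    using fstg by (simp add: dW_def prod_eq_iff)
  have dWc: "\<And>w. w \<in> carrier W \<Longrightarrow> dW w \<in> carrier W"
    using gc by (auto simp: dW_def mem_Times_iff)
  have der: "derivation W dW"
    unfolding derivation_def
  proof (intro conjI ballI)
    show "dW \<in> carrier W \<rightarrow> carrier W" using dWc by auto
  next
    fix x y assume xy: "x \<in> carrier W" "y \<in> carrier W"
    show "dW (x \<oplus>\<^bsub>W\<^esub> y) = dW x \<oplus>\<^bsub>W\<^esub> dW y"
      using ring_hom_add[OF g(1) xy] xy gW by (simp add: dual_simps)
    show "dW (x \<otimes>\<^bsub>W\<^esub> y) = dW x \<otimes>\<^bsub>W\<^esub> y \<oplus>\<^bsub>W\<^esub> x \<otimes>\<^bsub>W\<^esub> dW y"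
      using ring_hom_mult[OF g(1) xy] xy gW dWc by (simp add: dual_simps W.a_comm)
  qed
  have cW: "\<And>a. a \<in> carrier A \<Longrightarrow> dW (P a) = P (d a)"
    using g(2) by (simp add: dW_def psi_def)
  have compat: "\<And>a. a \<in> carrier A \<Longrightarrow> dlt (phi a) = phi (d a)" using dlt by blast
  have td: "tensor_deriv A B phi es W P dW dlt = E0 dW dlt"
    by (rule tensor_deriv_eq[OF d dlt(1) compat der cW])
  have cond: "weil_deriv_cond A d B phi es dlt D dD W P u dW"
    unfolding weil_deriv_cond_def diff_hom_def
  proof (intro conjI ballI)
    show "derivation W dW" by (rule der)
    show "P \<in> ring_hom A W" by (rule P)
    show "u \<in> ring_hom D T" by (rule u)
    fix a assume "a \<in> carrier A" then show "P (d a) = dW (P a)" by (simp add: cW)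
  next
    fix x assume x: "x \<in> carrier D"
    show "u (dD x) = tensor_deriv A B phi es W P dW dlt (u x)"
      unfolding td
    proof (rule vec_eqI)
      fix k assume k: "k < n"
      have "g (u x k) = fmap dlt x k" using g(3) x k by (metis tmap_k)
      then have "dW (u x k) = u (dD x) k \<ominus>\<^bsub>W\<^esub> Lv dlt (u x) k"
        using x k gW by (simp add: fmap_k0)
      moreover have "Lv dlt (u x) k \<in> carrier W" using x k dlt compat by (simp add: Lv_k_cl)
      ultimately show "u (dD x) k = E0 dW dlt (u x) k"
        using x k E0_k[OF d dlt(1) compat der cW, of "u x" k]
        by (simp add: Lv_k[symmetric] W.diff2)
    qed (use x E0_closed[OF d dlt(1) compat der cW] in auto)
  qed
  show ?thesis
  proof (intro exI conjI allI impI ballI)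
    show "weil_deriv_cond A d B phi es dlt D dD W P u dW" by (rule cond)
  next
    fix dW' w assume c': "weil_deriv_cond A d B phi es dlt D dD W P u dW'" and w: "w \<in> carrier W"
    have "(\<lambda>w. (w, dW' w)) w = g w"
      using guniq cond_hom[OF dlt c'] w by blast
    then show "dW' w = dW w" using w gW by simp
  qed
qed

end

lemma main_indep:
  assumes dl1: "derivation B dl1" "\<And>a. a \<in> carrier A \<Longrightarrow> dl1 (phi a) = phi (d a)"
      "\<And>b. b \<in> carrier B \<Longrightarrow> phiD (dl1 b) = dD (phiD b)"
    and dl2: "derivation B dl2" "\<And>a. a \<in> carrier A \<Longrightarrow> dl2 (phi a) = phi (d a)"
      "\<And>b. b \<in> carrier B \<Longrightarrow> phiD (dl2 b) = dD (phiD b)"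
    and c1: "weil_deriv_cond A d B phi es dl1 D dD W P u dW1"
    and c2: "weil_deriv_cond A d B phi es dl2 D dD W P u dW2"
    and w: "w \<in> carrier W"
  shows "dW1 w = dW2 w"
proof -
  obtain g where guniq: "\<forall>g'. g' \<in> ring_hom W (dual W) \<and> (\<forall>a\<in>carrier A. g' (P a) = psi a) \<and>
                   (\<forall>x\<in>carrier D. tensor_map es g' (u x) = fmap dl1 x) \<longrightarrow>
                   (\<forall>w\<in>carrier W. g' w = g w)"
    using UP[OF W.dual_cring psi_hom fmap_hom[OF dl1] fmap_inr[OF dl1]] by blast
  have eqf: "fmap dl1 = fmap dl2" by (rule fmap_indep[OF dl1 dl2])
  have "(\<lambda>w. (w, dW1 w)) w = g w"
    using guniq cond_hom[OF dl1 c1] w by blast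
  moreover have "(\<lambda>w. (w, dW2 w)) w = g w"
    using guniq cond_hom[OF dl2 c2] w eqf by auto
  ultimately have "(w, dW1 w) = (w, dW2 w)" by simp
  then show ?thesis by simp
qed

end

end



theorem theorem3p2:
  fixes A :: "'a ring" and d :: "'a \<Rightarrow> 'a"
    and B :: "'b ring" and phi :: "'a \<Rightarrow> 'b" and es :: "'b list" and delta :: "'b \<Rightarrow> 'b"
    and D :: "'d ring" and phiD :: "'b \<Rightarrow> 'd" and dD :: "'d \<Rightarrow> 'd"
    and W :: "'w ring" and phiW :: "'a \<Rightarrow> 'w" and u :: "'d \<Rightarrow> (nat \<Rightarrow> 'w)"
  assumes "cring A" and "cring B" and "cring D"
    and "phi \<in> ring_hom A B" and "phiD \<in> ring_hom B D"
    and "is_basis A B phi es"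
    and "derivation A d" and "derivation B delta" and "diff_hom A d B delta phi"
    and "derivation D dD" and "diff_hom B delta D dD phiD"
    and "is_weil_descent A B phi es D phiD W phiW u"
  shows "(\<exists>dW. weil_deriv_cond A d B phi es delta D dD W phiW u dW \<and>
            (\<forall>dW'. weil_deriv_cond A d B phi es delta D dD W phiW u dW' \<longrightarrow>
                    (\<forall>w\<in>carrier W. dW' w = dW w)))
       \<and> (\<forall>delta' dW1 dW2.
            derivation B delta' \<and> diff_hom A d B delta' phi \<and> diff_hom B delta' D dD phiD \<and>
            weil_deriv_cond A d B phi es delta D dD W phiW u dW1 \<and>
            weil_deriv_cond A d B phi es delta' D dD W phiW u dW2 \<longrightarrow>
            (\<forall>w\<in>carrier W. dW1 w = dW2 w))"
proof -
  have wd: "cring W" "phiW \<in> ring_hom A W" "u \<in> ring_hom D (tensor A B phi es W phiW)"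
    "\<And>b. b \<in> carrier B \<Longrightarrow> u (phiD b) = tensor_inr A B phi es W phiW b"
    using assms(12) unfolding is_weil_descent_def by auto
  interpret M: msetup A B phi es W phiW d D phiD dD u
    unfolding msetup_def msetup_axioms_def tsetup_def tsetup_axioms_def bsetup_def
    using assms wd by auto
  have dl: "\<And>a. a \<in> carrier A \<Longrightarrow> delta (phi a) = phi (d a)"
    using assms(9) unfolding diff_hom_def by auto
  have dlD: "\<And>b. b \<in> carrier B \<Longrightarrow> phiD (delta b) = dD (phiD b)"
    using assms(11) unfolding diff_hom_def by auto
  show ?thesis
  proof (intro conjI allI impI ballI)
    show "\<exists>dW. weil_deriv_cond A d B phi es delta D dD W phiW u dW \<and>
            (\<forall>dW'. weil_deriv_cond A d B phi es delta D dD W phiW u dW' \<longrightarrow>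
                    (\<forall>w\<in>carrier W. dW' w = dW w))"
      by (rule M.main_exists[OF assms(12) assms(8) dl dlD])
  next
    fix delta' dW1 dW2 w
    assume H: "derivation B delta' \<and> diff_hom A d B delta' phi \<and> diff_hom B delta' D dD phiD \<and>
            weil_deriv_cond A d B phi es delta D dD W phiW u dW1 \<and>
            weil_deriv_cond A d B phi es delta' D dD W phiW u dW2"
      and w: "w \<in> carrier W"
    have dl': "\<And>a. a \<in> carrier A \<Longrightarrow> delta' (phi a) = phi (d a)"
      using H unfolding diff_hom_def by auto
    have dlD': "\<And>b. b \<in> carrier B \<Longrightarrow> phiD (delta' b) = dD (phiD b)"
      using H unfolding diff_hom_def by auto
    show "dW1 w = dW2 w"
      using M.main_indep[OF assms(12) assms(8) dl dlD _ dl' dlD' _ _ w] H by blast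
  qed
qed

end
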